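(* Let $\mathbb K$ be a field and $\mathbb K\mathrm{IRel}=\bigoplus_{n\ge0}\mathbb K\mathrm{IRel}_n$ with basis $(\mathbb F_R)$ indexed by integer relations $R$ of all sizes (including the empty relation of size $0$). The product $\mathbb F_R\cdot\mathbb F_S=\sum_{T\in R\,\bar\sqcup\, S}\mathbb F_T$ and the coproduct $\Delta(\mathbb F_R)=\sum_{(X,Y)}\mathbb F_{\mathrm{std}(R|_X)}\otimes\mathbb F_{\mathrm{std}(R|_Y)}$, the sum over all total cuts $(X,Y)$ of $R$, endow $\mathbb K\mathrm{IRel}$ with the structure of a graded (by size) Hopf algebra with unit $\mathbb F_\varnothing$.
   Context: An integer relation of size $n$ is a reflexive binary relation on $[n]$; $\mathrm{IRel}_n$ denotes the set of them. For $R$ of size $n$ and $S$ of size $m$, the shifted shuffle $R\,\bar\sqcup\,S$ is the set of all integer relations $T$ of size $n+m$ whose restriction to $\{1,\dots,n\}$ equals $R$ and whose restriction to $\{n+1,\dots,n+m\}$ equals the shift $\bar S=\{(i+n,j+n):(i,j)\in S\}$ (relations between an element of $[n]$ and an element of $\{n+1,\dots,n+m\}$, in either direction, are arbitrary). A total cut of $R$ is an ordered pair $(X,Y)$ of disjoint sets with $X\cup Y=[n]$ such that for all $x\in X$, $y\in Y$: $(x,y)\in R$ and $(y,x)\notin R$ (including $X=\varnothing$ or $Y=\varnothing$). $R|_X$ is the restriction of $R$ to $X$, and $\mathrm{std}$ relabels the ground set order-preservingly by $1,\dots,|X|$. *)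

theory Defs
  imports Main
begin

text \<open>An integer relation of size n is encoded as a pair (n, R) with R a reflexive
  relation on {1..n}.\<close>

type_synonym irel = "nat \<times> (nat \<times> nat) set"

definition IRel :: "nat \<Rightarrow> irel set" where
  "IRel n = {(n, R) | R. R \<subseteq> {1..n} \<times> {1..n} \<and> (\<forall>i\<in>{1..n}. (i, i) \<in> R)}"

definition irels :: "irel set" where
  "irels = (\<Union>n. IRel n)"

definition empty_irel :: irel where
  "empty_irel = (0, {})"

definition shsh :: "irel \<Rightarrow> irel \<Rightarrow> irel set" where
  "shsh RR SS = (case RR of (n, R) \<Rightarrow> case SS of (m, S) \<Rightarrow>
     {(n + m, T) | T. (n + m, T) \<in> IRel (n + m)
        \<and> T \<inter> ({1..n} \<times> {1..n}) = R
        \<and> T \<inter> ({n+1..n+m} \<times> {n+1..n+m}) = (\<lambda>(i, j). (i + n, j + n)) ` S})"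

definition total_cut :: "irel \<Rightarrow> nat set \<Rightarrow> nat set \<Rightarrow> bool" where
  "total_cut RR X Y \<longleftrightarrow> X \<inter> Y = {} \<and> X \<union> Y = {1..fst RR}
     \<and> (\<forall>x\<in>X. \<forall>y\<in>Y. (x, y) \<in> snd RR \<and> (y, x) \<notin> snd RR)"

text \<open>std(R|_X): restrict to X and relabel order-preservingly by 1..|X|.\<close>
definition std_restr :: "irel \<Rightarrow> nat set \<Rightarrow> irel" where
  "std_restr RR X = (card X,
     {(i, j). 1 \<le> i \<and> i \<le> card X \<and> 1 \<le> j \<and> j \<le> card X \<and>
        (sorted_list_of_set X ! (i - 1), sorted_list_of_set X ! (j - 1)) \<in> snd RR})"

text \<open>Finitely supported functions (vectors with respect to a basis).\<close>
definition fsupp :: "('a \<Rightarrow> 'k::zero) \<Rightarrow> 'a set" where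
  "fsupp a = {x. a x \<noteq> 0}"

definition fs_on :: "'a set \<Rightarrow> ('a \<Rightarrow> 'k::zero) set" where
  "fs_on A = {a. finite (fsupp a) \<and> fsupp a \<subseteq> A}"

definition bas :: "'a \<Rightarrow> 'a \<Rightarrow> 'k::{zero,one}" where
  "bas x = (\<lambda>y. if y = x then 1 else 0)"

text \<open>Linear extension of a map given on basis elements (by its matrix f).\<close>
definition lin :: "('a \<Rightarrow> 'b \<Rightarrow> 'k::comm_semiring_1) \<Rightarrow> ('a \<Rightarrow> 'k) \<Rightarrow> 'b \<Rightarrow> 'k" where
  "lin f a = (\<lambda>y. \<Sum>x\<in>fsupp a. a x * f x y)"

definition mult_basis :: "irel \<Rightarrow> irel \<Rightarrow> irel \<Rightarrow> 'k::{zero,one}" where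
  "mult_basis R S = (\<lambda>T. if T \<in> shsh R S then 1 else 0)"

definition mult :: "(irel \<Rightarrow> 'k::comm_semiring_1) \<Rightarrow> (irel \<Rightarrow> 'k) \<Rightarrow> irel \<Rightarrow> 'k" where
  "mult a b = lin (\<lambda>R. lin (\<lambda>S. mult_basis R S) b) a"

text \<open>Coproduct on basis: sum over total cuts; tensors F_U (x) F_V are encoded as pairs (U,V).\<close>
definition cop_basis :: "irel \<Rightarrow> irel \<times> irel \<Rightarrow> 'k::comm_semiring_1" where
  "cop_basis R = (\<lambda>(U, V). of_nat (card {(X, Y). total_cut R X Y
        \<and> std_restr R X = U \<and> std_restr R Y = V}))"

definition cop :: "(irel \<Rightarrow> 'k::comm_semiring_1) \<Rightarrow> irel \<times> irel \<Rightarrow> 'k" where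
  "cop a = lin cop_basis a"

text \<open>(Delta (x) id) and (id (x) Delta) on the tensor square, with values in the
  triple tensor product (basis indexed by triples).\<close>
definition cop_l :: "(irel \<times> irel \<Rightarrow> 'k::comm_semiring_1) \<Rightarrow> irel \<times> irel \<times> irel \<Rightarrow> 'k" where
  "cop_l t = lin (\<lambda>(P, Q) (U, V, W). cop_basis P (U, V) * bas Q W) t"

definition cop_r :: "(irel \<times> irel \<Rightarrow> 'k::comm_semiring_1) \<Rightarrow> irel \<times> irel \<times> irel \<Rightarrow> 'k" where
  "cop_r t = lin (\<lambda>(P, Q) (U, V, W). bas P U * cop_basis Q (V, W)) t"

definition mult2 :: "(irel \<times> irel \<Rightarrow> 'k::comm_semiring_1) \<Rightarrow> (irel \<times> irel \<Rightarrow> 'k) \<Rightarrow> irel \<times> irel \<Rightarrow> 'k" where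
  "mult2 t t' = lin (\<lambda>(P, Q). lin (\<lambda>(P', Q') (U, V).
       mult_basis P P' U * mult_basis Q Q' V) t') t"

end

theory Submission
  imports Defs
begin

lemma fsupp_bas[simp]: "fsupp (bas x :: 'a \<Rightarrow> 'k::zero_neq_one) = {x}"
  by (auto simp: fsupp_def bas_def)

lemma lin_bas[simp]: "lin f (bas x) = f x"
  by (auto simp: lin_def bas_def fsupp_def)

lemma lin_superset:
  assumes "finite A" "fsupp a \<subseteq> A"
  shows "lin f a = (\<lambda>y. \<Sum>x\<in>A. a x * f x y)"
proof
  fix y show "lin f a y = (\<Sum>x\<in>A. a x * f x y)"
    unfolding lin_def
    by (rule sum.mono_neutral_left[OF assms(1) assms(2)]) (auto simp: fsupp_def)
qed

lemma lin_bas_id: "finite (fsupp a) \<Longrightarrow> lin bas a = a"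
proof
  fix y assume f: "finite (fsupp a)"
  show "lin bas a y = a y"
  proof (cases "y \<in> fsupp a")
    case True
    then show ?thesis unfolding lin_def bas_def
      by (simp add: f if_distrib[of "\<lambda>t. _ * t"] cong: if_cong)
  next
    case False
    then have "a y = 0" by (simp add: fsupp_def)
    moreover have "lin bas a y = 0" unfolding lin_def bas_def using False by (intro sum.neutral) auto
    ultimately show ?thesis by simp
  qed
qed

lemma fsupp_lin: "fsupp (lin f a) \<subseteq> (\<Union>x\<in>fsupp a. fsupp (f x))"
proof
  fix y assume "y \<in> fsupp (lin f a)"
  then have "(\<Sum>x\<in>fsupp a. a x * f x y) \<noteq> 0" by (simp add: fsupp_def lin_def)
  then obtain x where "x \<in> fsupp a" "a x * f x y \<noteq> 0" by (rule sum.not_neutral_contains_not_neutral)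
  then show "y \<in> (\<Union>x\<in>fsupp a. fsupp (f x))" by (auto simp: fsupp_def)
qed

lemma lin_fs_on:
  assumes "finite (fsupp a)" "\<And>x. x \<in> fsupp a \<Longrightarrow> f x \<in> fs_on B"
  shows "lin f a \<in> fs_on B"
proof -
  have "finite (\<Union>x\<in>fsupp a. fsupp (f x))" using assms by (auto simp: fs_on_def)
  moreover have "(\<Union>x\<in>fsupp a. fsupp (f x)) \<subseteq> B" using assms by (auto simp: fs_on_def)
  ultimately show ?thesis using fsupp_lin[of f a] by (auto simp: fs_on_def intro: finite_subset)
qed

lemma lin_cong: "(\<And>x. x \<in> fsupp a \<Longrightarrow> f x = g x) \<Longrightarrow> lin f a = lin g a"
  unfolding lin_def by auto

lemma lin_lin:
  assumes "finite (fsupp a)" "\<And>x. x \<in> fsupp a \<Longrightarrow> finite (fsupp (g x))"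
  shows "lin f (lin g a) = lin (\<lambda>x. lin f (g x)) a"
proof
  fix z
  define B where "B = (\<Union>x\<in>fsupp a. fsupp (g x))"
  have fB: "finite B" using assms by (simp add: B_def)
  have "lin f (lin g a) z = (\<Sum>y\<in>B. lin g a y * f y z)"
    using lin_superset[OF fB, of "lin g a" f] fsupp_lin[of g a] by (simp add: B_def)
  also have "\<dots> = (\<Sum>y\<in>B. \<Sum>x\<in>fsupp a. a x * g x y * f y z)"
    by (simp add: lin_def sum_distrib_right)
  also have "\<dots> = (\<Sum>x\<in>fsupp a. a x * (\<Sum>y\<in>B. g x y * f y z))"
    by (subst sum.swap) (simp add: sum_distrib_left mult.assoc)
  also have "\<dots> = (\<Sum>x\<in>fsupp a. a x * lin f (g x) z)"
  proof (rule sum.cong[OF refl])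
    fix x assume x: "x \<in> fsupp a"
    have "fsupp (g x) \<subseteq> B" using x by (auto simp: B_def)
    then show "a x * (\<Sum>y\<in>B. g x y * f y z) = a x * lin f (g x) z"
      using lin_superset[OF fB, of "g x" f] by simp
  qed
  finally show "lin f (lin g a) z = lin (\<lambda>x. lin f (g x)) a z" by (simp add: lin_def)
qed

lemma lin_swap: "lin (\<lambda>x. lin (g x) b) a = lin (\<lambda>y. lin (\<lambda>x. g x y) a) b"
proof
  fix z show "lin (\<lambda>x. lin (g x) b) a z = lin (\<lambda>y. lin (\<lambda>x. g x y) a) b z"
    unfolding lin_def by (simp add: sum_distrib_left mult_ac) (rule sum.swap)
qed

lemma lin_count:
  fixes F :: "'a \<Rightarrow> 'b \<Rightarrow> 'k::comm_semiring_1"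
  assumes "finite C"
  shows "lin F (\<lambda>z. of_nat (card {c\<in>C. h c = z})) = (\<lambda>y. \<Sum>c\<in>C. F (h c) y)"
proof
  fix y
  have sub: "fsupp (\<lambda>z. (of_nat (card {c\<in>C. h c = z}) :: 'k)) \<subseteq> h ` C"
  proof
    fix z assume "z \<in> fsupp (\<lambda>z. (of_nat (card {c\<in>C. h c = z}) :: 'k))"
    then have "card {c\<in>C. h c = z} \<noteq> 0"
    proof (intro notI)
      assume "card {c\<in>C. h c = z} = 0"
      then have "(of_nat (card {c\<in>C. h c = z}) :: 'k) = 0" by simp
      then show False using \<open>z \<in> fsupp _\<close> by (simp add: fsupp_def)
    qed
    show "z \<in> h ` C"
    proof (rule ccontr)
      assume "z \<notin> h ` C"
      then have emp: "{c\<in>C. h c = z} = {}" by auto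
      show False using \<open>card {c\<in>C. h c = z} \<noteq> 0\<close> unfolding emp by simp
    qed
  qed
  have "lin F (\<lambda>z. of_nat (card {c\<in>C. h c = z})) y
      = (\<Sum>z\<in>h ` C. of_nat (card {c\<in>C. h c = z}) * F z y)"
    using fun_cong[OF lin_superset[OF _ sub, of F]] assms by simp
  also have "\<dots> = (\<Sum>z\<in>h ` C. \<Sum>c\<in>{c\<in>C. h c = z}. F (h c) y)"
  proof (rule sum.cong[OF refl])
    fix z
    have "(\<Sum>c\<in>{c\<in>C. h c = z}. F (h c) y) = (\<Sum>c\<in>{c\<in>C. h c = z}. F z y)"
      by (rule sum.cong) auto
    then show "of_nat (card {c\<in>C. h c = z}) * F z y = (\<Sum>c\<in>{c\<in>C. h c = z}. F (h c) y)"
      by simp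
  qed
  also have "\<dots> = (\<Sum>c\<in>C. F (h c) y)"
    by (rule sum.group) (use assms in auto)
  finally show "lin F (\<lambda>z. of_nat (card {c\<in>C. h c = z})) y = (\<Sum>c\<in>C. F (h c) y)" .
qed

lemma lin_indicator:
  assumes "finite B"
  shows "lin F (\<lambda>z. if z \<in> B then 1 else 0) = (\<lambda>y. \<Sum>x\<in>B. F x y)"
  using lin_superset[OF assms, of "\<lambda>z. if z \<in> B then 1 else 0" F]
  by (simp add: fsupp_def subset_iff)

lemma lin_sum_fun:
  fixes g :: "'i \<Rightarrow> 'a \<Rightarrow> 'k::comm_semiring_1"
  assumes "finite I" "\<And>i. i \<in> I \<Longrightarrow> finite (fsupp (g i))"
  shows "lin F (\<lambda>z. \<Sum>i\<in>I. g i z) = (\<lambda>y. \<Sum>i\<in>I. lin F (g i) y)"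
proof
  fix y
  define B where "B = (\<Union>i\<in>I. fsupp (g i))"
  have fB: "finite B" using assms by (simp add: B_def)
  have s: "fsupp (\<lambda>z. \<Sum>i\<in>I. g i z) \<subseteq> B"
    by (auto simp: B_def fsupp_def dest: sum.not_neutral_contains_not_neutral)
  have "lin F (\<lambda>z. \<Sum>i\<in>I. g i z) y = (\<Sum>z\<in>B. (\<Sum>i\<in>I. g i z) * F z y)"
    using lin_superset[OF fB s, of F] by meson
  also have "\<dots> = (\<Sum>i\<in>I. \<Sum>z\<in>B. g i z * F z y)"
    by (subst sum.swap) (simp add: sum_distrib_right)
  also have "\<dots> = (\<Sum>i\<in>I. lin F (g i) y)"
  proof (rule sum.cong[OF refl])
    fix i assume "i \<in> I"
    then have "fsupp (g i) \<subseteq> B" by (auto simp: B_def)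
    from fun_cong[OF lin_superset[OF fB this, of F]]
    show "(\<Sum>z\<in>B. g i z * F z y) = lin F (g i) y" by simp
  qed
  finally show "lin F (\<lambda>z. \<Sum>i\<in>I. g i z) y = (\<Sum>i\<in>I. lin F (g i) y)" .
qed


definition enum :: "nat set \<Rightarrow> nat \<Rightarrow> nat" where
  "enum X i = sorted_list_of_set X ! (i - 1)"

definition smono :: "nat \<Rightarrow> (nat \<Rightarrow> nat) \<Rightarrow> bool" where
  "smono k f \<longleftrightarrow> (\<forall>i\<in>{1..k}. \<forall>j\<in>{1..k}. i < j \<longrightarrow> f i < f j)"

lemma smono_inj: "smono k f \<Longrightarrow> inj_on f {1..k}"
proof (rule inj_onI)
  fix i j assume s: "smono k f" and ij: "i \<in> {1..k}" "j \<in> {1..k}" "f i = f j"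
  show "i = j"
  proof (rule ccontr)
    assume "i \<noteq> j"
    then consider "i < j" | "j < i" by linarith
    then show False using s ij unfolding smono_def by cases force+
  qed
qed

lemma enum_unique:
  assumes "smono k f" "f ` {1..k} = X"
  shows "card X = k" "\<And>i. i \<in> {1..k} \<Longrightarrow> enum X i = f i"
proof -
  have "card (f ` {1..k}) = card {1..k}" by (rule card_image[OF smono_inj[OF assms(1)]])
  then show ck: "card X = k" using assms(2) by simp
  have fX: "finite X" using assms(2) by blast
  define l where "l = map f [1..<k+1]"
  have sw0: "sorted_wrt (\<lambda>x y. f x < f y) [1..<k+1]"
    by (rule sorted_wrt_mono_rel[OF _ sorted_wrt_upt]) (use assms(1) in \<open>auto simp: smono_def\<close>)
  have sw: "sorted_wrt (<) l" unfolding l_def sorted_wrt_map using sw0 by simp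
  have "set l = X" using assms(2) by (auto simp: l_def atLeastLessThanSuc_atLeastAtMost)
  moreover have "length l = card X" using ck by (simp add: l_def)
  ultimately have "sorted_list_of_set X = l"
    using sorted_list_of_set_unique[OF fX] sw by blast
  then show "\<And>i. i \<in> {1..k} \<Longrightarrow> enum X i = f i"
  proof -
    fix i assume i: "i \<in> {1..k}"
    have i1: "1 \<le> i" "i \<le> k" using i by auto
    then have ln: "i - 1 < length [1..<k+1]" by simp
    have "[1..<k+1] ! (i - 1) = 1 + (i - 1)" using i by (simp del: upt_Suc add: nth_upt)
    then have "l ! (i - 1) = f (1 + (i - 1))" unfolding l_def
      using nth_map[OF ln, of f] by simp
    then show "enum X i = f i" using i \<open>sorted_list_of_set X = l\<close> by (simp add: enum_def)
  qed
qed

lemma smono_enum: "finite X \<Longrightarrow> smono (card X) (enum X)"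
proof -
  assume fX: "finite X"
  have "sorted_wrt (<) (sorted_list_of_set X)" using fX by simp
  then show ?thesis unfolding smono_def enum_def
    by (auto simp: sorted_wrt_iff_nth_less fX)
qed

lemma enum_image: "finite X \<Longrightarrow> enum X ` {1..card X} = X"
proof -
  assume fX: "finite X"
  let ?xs = "sorted_list_of_set X"
  have len: "length ?xs = card X" using fX by simp
  have "enum X ` {1..card X} = set ?xs"
  proof
    show "enum X ` {1..card X} \<subseteq> set ?xs"
    proof
      fix x assume "x \<in> enum X ` {1..card X}"
      then obtain i where i: "i \<in> {1..card X}" "x = ?xs ! (i - 1)" by (auto simp: enum_def)
      then have "i - 1 < length ?xs" using len by auto
      then show "x \<in> set ?xs" using i by simp
    qed
  next
    show "set ?xs \<subseteq> enum X ` {1..card X}"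
    proof
      fix x assume "x \<in> set ?xs"
      then obtain j where j: "j < length ?xs" "?xs ! j = x" by (auto simp: in_set_conv_nth)
      then have "enum X (j + 1) = x" "j + 1 \<in> {1..card X}" using len by (auto simp: enum_def)
      then show "x \<in> enum X ` {1..card X}" by (metis imageI)
    qed
  qed
  then show ?thesis using fX by simp
qed

lemma enum_bij: "finite X \<Longrightarrow> bij_betw (enum X) {1..card X} X"
  using enum_image smono_inj smono_enum by (simp add: bij_betw_def)

lemma enum_in: "finite X \<Longrightarrow> i \<in> {1..card X} \<Longrightarrow> enum X i \<in> X"
  using enum_image by blast

lemma enum_less: "finite X \<Longrightarrow> i \<in> {1..card X} \<Longrightarrow> j \<in> {1..card X} \<Longrightarrow> i < j \<Longrightarrow> enum X i < enum X j"
  using smono_enum unfolding smono_def by blast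

lemma enum_inj_iff: "finite X \<Longrightarrow> i \<in> {1..card X} \<Longrightarrow> j \<in> {1..card X} \<Longrightarrow> enum X i = enum X j \<longleftrightarrow> i = j"
  using smono_inj[OF smono_enum] by (meson inj_on_eq_iff)



definition pullrel :: "nat \<Rightarrow> (nat \<Rightarrow> nat) \<Rightarrow> (nat \<times> nat) set \<Rightarrow> (nat \<times> nat) set" where
  "pullrel k f R = {(i, j). i \<in> {1..k} \<and> j \<in> {1..k} \<and> (f i, f j) \<in> R}"

lemma std_enum: "std_restr R X = (card X, pullrel (card X) (enum X) (snd R))"
  unfolding std_restr_def pullrel_def enum_def by auto

lemma pullrel_cong: "(\<And>i. i \<in> {1..k} \<Longrightarrow> f i = g i) \<Longrightarrow> pullrel k f R = pullrel k g R"
  unfolding pullrel_def by auto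

lemma std_char:
  assumes "smono k f" "f ` {1..k} = X"
  shows "std_restr R X = (k, pullrel k f (snd R))"
proof -
  have ck: "card X = k" by (rule enum_unique(1)[OF assms])
  have "pullrel k (enum X) (snd R) = pullrel k f (snd R)"
    by (rule pullrel_cong) (rule enum_unique(2)[OF assms])
  then show ?thesis by (simp add: std_enum ck)
qed

lemma std_std:
  assumes fX: "finite X" and Z: "Z \<subseteq> {1..card X}"
  shows "std_restr (std_restr R X) Z = std_restr R (enum X ` Z)"
proof -
  have fZ: "finite Z" using Z finite_subset by blast
  let ?f = "enum X \<circ> enum Z"
  have ez: "\<And>i. i \<in> {1..card Z} \<Longrightarrow> enum Z i \<in> {1..card X}" using enum_in[OF fZ] Z by blast
  have sm: "smono (card Z) ?f"
    unfolding smono_def using ez enum_less[OF fX] enum_less[OF fZ] by simp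
  have im: "?f ` {1..card Z} = enum X ` Z" using enum_image[OF fZ] by (metis image_comp)
  have "std_restr R (enum X ` Z) = (card Z, pullrel (card Z) ?f (snd R))"
    by (rule std_char[OF sm im])
  also have "\<dots> = std_restr (std_restr R X) Z"
    unfolding std_enum pullrel_def using ez by auto
  finally show ?thesis by simp
qed

lemma IRel_iff: "(n, R) \<in> IRel n' \<longleftrightarrow> n = n' \<and> R \<subseteq> {1..n} \<times> {1..n} \<and> (\<forall>i\<in>{1..n}. (i, i) \<in> R)"
  unfolding IRel_def by auto

lemma irels_iff: "RR \<in> irels \<longleftrightarrow> snd RR \<subseteq> {1..fst RR} \<times> {1..fst RR} \<and> (\<forall>i\<in>{1..fst RR}. (i, i) \<in> snd RR)"
  unfolding irels_def IRel_def by (cases RR) auto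

lemma std_full: "RR \<in> irels \<Longrightarrow> std_restr RR {1..fst RR} = RR"
proof -
  assume R: "RR \<in> irels"
  have "std_restr RR {1..fst RR} = (fst RR, pullrel (fst RR) id (snd RR))"
    by (rule std_char) (auto simp: smono_def)
  also have "\<dots> = RR" using R unfolding irels_iff pullrel_def by (cases RR) auto
  finally show ?thesis .
qed

lemma std_empty[simp]: "std_restr RR {} = empty_irel"
  unfolding std_restr_def empty_irel_def by simp

lemma std_irels: "RR \<in> irels \<Longrightarrow> X \<subseteq> {1..fst RR} \<Longrightarrow> std_restr RR X \<in> irels"
proof -
  assume R: "RR \<in> irels" and X: "X \<subseteq> {1..fst RR}"
  then have fX: "finite X" using finite_subset by blast
  have "\<And>i. i \<in> {1..card X} \<Longrightarrow> enum X i \<in> {1..fst RR}" using enum_in[OF fX] X by blast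
  then show ?thesis unfolding irels_iff std_enum pullrel_def using R
    by (auto simp: irels_iff)
qed

lemma std_fst[simp]: "fst (std_restr RR X) = card X"
  by (simp add: std_restr_def)

lemma std_eq_empty_iff: "finite X \<Longrightarrow> std_restr RR X = empty_irel \<longleftrightarrow> X = {}"
  unfolding std_restr_def empty_irel_def by auto


definition cuts :: "irel \<Rightarrow> (nat set \<times> nat set) set" where
  "cuts RR = {(X, Y). total_cut RR X Y}"

definition fwd :: "(nat \<times> nat) set \<Rightarrow> nat set \<Rightarrow> nat set \<Rightarrow> bool" where
  "fwd R P Q \<longleftrightarrow> (\<forall>x\<in>P. \<forall>y\<in>Q. (x, y) \<in> R \<and> (y, x) \<notin> R)"

lemma total_cut_fwd: "total_cut RR X Y \<longleftrightarrow> X \<inter> Y = {} \<and> X \<union> Y = {1..fst RR} \<and> fwd (snd RR) X Y"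
  unfolding total_cut_def fwd_def by simp

lemma cuts_iff: "(X, Y) \<in> cuts RR \<longleftrightarrow> X \<inter> Y = {} \<and> X \<union> Y = {1..fst RR} \<and> fwd (snd RR) X Y"
  unfolding cuts_def total_cut_fwd by simp

lemma cut_sub: "(X, Y) \<in> cuts RR \<Longrightarrow> X \<subseteq> {1..fst RR} \<and> Y \<subseteq> {1..fst RR}"
proof -
  assume "(X, Y) \<in> cuts RR"
  then have "X \<union> Y = {1..fst RR}" by (simp add: cuts_iff)
  then show ?thesis by blast
qed

lemma finite_cuts: "finite (cuts RR)"
proof -
  have "cuts RR \<subseteq> Pow {1..fst RR} \<times> Pow {1..fst RR}" using cut_sub by fast
  then show ?thesis by (rule finite_subset) simp
qed

definition cuts3 :: "irel \<Rightarrow> (nat set \<times> nat set \<times> nat set) set" where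
  "cuts3 RR = {(A, B, C). A \<inter> B = {} \<and> A \<inter> C = {} \<and> B \<inter> C = {} \<and> A \<union> B \<union> C = {1..fst RR}
      \<and> fwd (snd RR) A B \<and> fwd (snd RR) A C \<and> fwd (snd RR) B C}"

lemma fwd_pull:
  assumes "finite X" "X1 \<subseteq> {1..card X}" "X2 \<subseteq> {1..card X}"
  shows "fwd (pullrel (card X) (enum X) R) X1 X2 \<longleftrightarrow> fwd R (enum X ` X1) (enum X ` X2)"
  using assms unfolding fwd_def pullrel_def by auto

lemma cut_std_iff:
  assumes fX: "finite X"
  shows "(X1, X2) \<in> cuts (std_restr RR X) \<longleftrightarrow>
     X1 \<inter> X2 = {} \<and> X1 \<union> X2 = {1..card X} \<and> fwd (snd RR) (enum X ` X1) (enum X ` X2)"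
proof -
  have "(X1, X2) \<in> cuts (std_restr RR X) \<longleftrightarrow>
     X1 \<inter> X2 = {} \<and> X1 \<union> X2 = {1..card X} \<and> fwd (pullrel (card X) (enum X) (snd RR)) X1 X2"
    unfolding cuts_iff by (simp add: std_enum)
  then show ?thesis using fwd_pull[OF fX, of X1 X2 "snd RR"] by auto
qed


lemma cut_finite: "(X, Y) \<in> cuts RR \<Longrightarrow> finite X \<and> finite Y"
  using cut_sub finite_subset by (metis finite_atLeastAtMost)

lemma bij_pre_image:
  assumes "bij_betw e I X" "A \<subseteq> X"
  shows "e ` {i\<in>I. e i \<in> A} = A"
  using assms unfolding bij_betw_def by auto

lemma inj_pre_image:
  assumes "inj_on e I" "Z \<subseteq> I"
  shows "{i\<in>I. e i \<in> e ` Z} = Z"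
  using assms unfolding inj_on_def by auto

lemma fwd_mono: "fwd R A B \<Longrightarrow> A' \<subseteq> A \<Longrightarrow> B' \<subseteq> B \<Longrightarrow> fwd R A' B'"
  unfolding fwd_def by blast

lemma fwd_Un1: "fwd R (A \<union> B) C \<longleftrightarrow> fwd R A C \<and> fwd R B C"
  unfolding fwd_def by blast

lemma fwd_Un2: "fwd R A (B \<union> C) \<longleftrightarrow> fwd R A B \<and> fwd R A C"
  unfolding fwd_def by blast

lemma coassoc_left_sum:
  fixes \<phi> :: "irel \<Rightarrow> irel \<Rightarrow> irel \<Rightarrow> 'b::comm_monoid_add"
  shows "(\<Sum>(X, Y)\<in>cuts RR. \<Sum>(X1, X2)\<in>cuts (std_restr RR X).
            \<phi> (std_restr (std_restr RR X) X1) (std_restr (std_restr RR X) X2) (std_restr RR Y))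
       = (\<Sum>(A, B, C)\<in>cuts3 RR. \<phi> (std_restr RR A) (std_restr RR B) (std_restr RR C))"
proof -
  define S where "S = Sigma (cuts RR) (\<lambda>(X, Y). cuts (std_restr RR X))"
  define h where "h = (\<lambda>((X::nat set, Y::nat set), (X1::nat set, X2::nat set)). (enum X ` X1, enum X ` X2, Y))"
  have "(\<Sum>(X, Y)\<in>cuts RR. \<Sum>(X1, X2)\<in>cuts (std_restr RR X).
            \<phi> (std_restr (std_restr RR X) X1) (std_restr (std_restr RR X) X2) (std_restr RR Y))
      = (\<Sum>((X, Y), (X1, X2))\<in>S.
            \<phi> (std_restr (std_restr RR X) X1) (std_restr (std_restr RR X) X2) (std_restr RR Y))"
    unfolding S_def by (subst sum.Sigma[symmetric]) (auto simp: finite_cuts split_def)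
  also have "\<dots> = (\<Sum>p\<in>S. (\<lambda>(A, B, C). \<phi> (std_restr RR A) (std_restr RR B) (std_restr RR C)) (h p))"
  proof (rule sum.cong[OF refl], goal_cases)
    case (1 p)
    then obtain X Y X1 X2 where p: "p = ((X, Y), (X1, X2))" and c: "(X, Y) \<in> cuts RR"
      and c2: "(X1, X2) \<in> cuts (std_restr RR X)" unfolding S_def by auto
    have fX: "finite X" using cut_finite[OF c] by simp
    have "X1 \<subseteq> {1..card X}" "X2 \<subseteq> {1..card X}" using cut_sub[OF c2] by auto
    then show ?case
      by (simp add: p h_def std_std[OF fX])
  qed
  also have "\<dots> = (\<Sum>(A, B, C)\<in>h ` S. \<phi> (std_restr RR A) (std_restr RR B) (std_restr RR C))"
  proof (rule sum.reindex[symmetric, unfolded comp_def])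
    show "inj_on h S"
    proof (rule inj_onI)
      fix p q assume "p \<in> S" "q \<in> S" and hpq: "h p = h q"
      then obtain X Y X1 X2 where p: "p = ((X, Y), (X1, X2))" and c: "(X, Y) \<in> cuts RR"
        and c2: "(X1, X2) \<in> cuts (std_restr RR X)" unfolding S_def by auto
      from \<open>q \<in> S\<close> obtain X' Y' X1' X2' where q: "q = ((X', Y'), (X1', X2'))" and c': "(X', Y') \<in> cuts RR"
        and c2': "(X1', X2') \<in> cuts (std_restr RR X')" unfolding S_def by auto
      have YY: "Y = Y'" using hpq by (simp add: p q h_def)
      have XX: "X = X'" using c c' YY unfolding cuts_iff by blast
      have fX: "finite X" using cut_finite[OF c] by simp
      have inj: "inj_on (enum X) {1..card X}" using enum_bij[OF fX] bij_betw_def by blast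
      have s: "X1 \<subseteq> {1..card X}" "X2 \<subseteq> {1..card X}" "X1' \<subseteq> {1..card X}" "X2' \<subseteq> {1..card X}"
        using cut_sub[OF c2] cut_sub[OF c2'] XX by auto
      have "enum X ` X1 = enum X ` X1'" "enum X ` X2 = enum X ` X2'" using hpq XX by (simp_all add: p q h_def)
      then have "X1 = X1'" "X2 = X2'" using inj_pre_image[OF inj] s by metis+
      then show "p = q" using p q XX YY by simp
    qed
  qed
  also have "h ` S = cuts3 RR"
  proof
    show "h ` S \<subseteq> cuts3 RR"
    proof
      fix t assume "t \<in> h ` S"
      then obtain X Y X1 X2 where t: "t = (enum X ` X1, enum X ` X2, Y)" and c: "(X, Y) \<in> cuts RR"
        and c2: "(X1, X2) \<in> cuts (std_restr RR X)" unfolding S_def h_def by auto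
      have fX: "finite X" using cut_finite[OF c] by simp
      have bij: "bij_betw (enum X) {1..card X} X" by (rule enum_bij[OF fX])
      from c2[unfolded cut_std_iff[OF fX]] have d: "X1 \<inter> X2 = {}" "X1 \<union> X2 = {1..card X}"
        and f: "fwd (snd RR) (enum X ` X1) (enum X ` X2)" by auto
      have inj: "inj_on (enum X) {1..card X}" using bij by (simp add: bij_betw_def)
      have eX: "enum X ` {1..card X} = X" using bij by (simp add: bij_betw_def)
      have i1: "enum X ` X1 \<union> enum X ` X2 = X" using eX d(2) by (simp add: image_Un[symmetric])
      have i2: "enum X ` X1 \<inter> enum X ` X2 = {}"
        using inj_on_image_Int[OF inj, of X1 X2] d by auto
      from c[unfolded cuts_iff] have c1: "X \<inter> Y = {}" and c2': "X \<union> Y = {1..fst RR}"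
        and c3: "fwd (snd RR) X Y" by auto
      have s1: "enum X ` X1 \<subseteq> X" "enum X ` X2 \<subseteq> X" using i1 by auto
      have "enum X ` X1 \<inter> Y = {}" "enum X ` X2 \<inter> Y = {}" using s1 c1 by auto
      moreover have "enum X ` X1 \<union> enum X ` X2 \<union> Y = {1..fst RR}" using i1 c2' by simp
      moreover have "fwd (snd RR) (enum X ` X1) Y" "fwd (snd RR) (enum X ` X2) Y"
        using fwd_mono[OF c3 _ subset_refl] s1 by auto
      ultimately show "t \<in> cuts3 RR" unfolding cuts3_def t using i2 f by simp
    qed
  next
    show "cuts3 RR \<subseteq> h ` S"
    proof
      fix t assume "t \<in> cuts3 RR"
      then obtain A B C where t: "t = (A, B, C)" and d: "A \<inter> B = {}" "A \<inter> C = {}" "B \<inter> C = {}"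
        "A \<union> B \<union> C = {1..fst RR}" and f: "fwd (snd RR) A B" "fwd (snd RR) A C" "fwd (snd RR) B C"
        unfolding cuts3_def by auto
      define X where "X = A \<union> B"
      have "X \<inter> C = {}" "X \<union> C = {1..fst RR}" using d by (auto simp: X_def)
      moreover have "fwd (snd RR) X C" using f by (simp add: X_def fwd_Un1)
      ultimately have c: "(X, C) \<in> cuts RR" unfolding cuts_iff by simp
      have fX: "finite X" using cut_finite[OF c] by simp
      have bij: "bij_betw (enum X) {1..card X} X" by (rule enum_bij[OF fX])
      define X1 where "X1 = {i\<in>{1..card X}. enum X i \<in> A}"
      define X2 where "X2 = {i\<in>{1..card X}. enum X i \<in> B}"
      have e1: "enum X ` X1 = A" unfolding X1_def by (rule bij_pre_image[OF bij]) (simp add: X_def)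
      have e2: "enum X ` X2 = B" unfolding X2_def by (rule bij_pre_image[OF bij]) (simp add: X_def)
      have "X1 \<inter> X2 = {}" using d unfolding X1_def X2_def by auto
      moreover have "X1 \<union> X2 = {1..card X}"
      proof -
        have "\<And>i. i \<in> {1..card X} \<Longrightarrow> enum X i \<in> A \<union> B" using enum_in[OF fX] by (simp add: X_def)
        then show ?thesis unfolding X1_def X2_def by blast
      qed
      ultimately have c2: "(X1, X2) \<in> cuts (std_restr RR X)"
        unfolding cut_std_iff[OF fX] e1 e2 using f by simp
      have "h ((X, C), (X1, X2)) = t" by (simp add: h_def e1 e2 t)
      moreover have "((X, C), (X1, X2)) \<in> S" using c c2 by (simp add: S_def)
      ultimately show "t \<in> h ` S" by blast
    qed
  qed
  finally show ?thesis .
qed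


lemma coassoc_right_sum:
  fixes \<phi> :: "irel \<Rightarrow> irel \<Rightarrow> irel \<Rightarrow> 'b::comm_monoid_add"
  shows "(\<Sum>(X, Y)\<in>cuts RR. \<Sum>(Y1, Y2)\<in>cuts (std_restr RR Y).
            \<phi> (std_restr RR X) (std_restr (std_restr RR Y) Y1) (std_restr (std_restr RR Y) Y2))
       = (\<Sum>(A, B, C)\<in>cuts3 RR. \<phi> (std_restr RR A) (std_restr RR B) (std_restr RR C))"
proof -
  define S where "S = Sigma (cuts RR) (\<lambda>(X, Y). cuts (std_restr RR Y))"
  define h where "h = (\<lambda>((X::nat set, Y::nat set), (Y1::nat set, Y2::nat set)). (X, enum Y ` Y1, enum Y ` Y2))"
  have "(\<Sum>(X, Y)\<in>cuts RR. \<Sum>(Y1, Y2)\<in>cuts (std_restr RR Y).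
            \<phi> (std_restr RR X) (std_restr (std_restr RR Y) Y1) (std_restr (std_restr RR Y) Y2))
      = (\<Sum>((X, Y), (Y1, Y2))\<in>S.
            \<phi> (std_restr RR X) (std_restr (std_restr RR Y) Y1) (std_restr (std_restr RR Y) Y2))"
    unfolding S_def by (subst sum.Sigma[symmetric]) (auto simp: finite_cuts split_def)
  also have "\<dots> = (\<Sum>p\<in>S. (\<lambda>(A, B, C). \<phi> (std_restr RR A) (std_restr RR B) (std_restr RR C)) (h p))"
  proof (rule sum.cong[OF refl], goal_cases)
    case (1 p)
    then obtain X Y Y1 Y2 where p: "p = ((X, Y), (Y1, Y2))" and c: "(X, Y) \<in> cuts RR"
      and c2: "(Y1, Y2) \<in> cuts (std_restr RR Y)" unfolding S_def by auto
    have fY: "finite Y" using cut_finite[OF c] by simp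
    have "Y1 \<subseteq> {1..card Y}" "Y2 \<subseteq> {1..card Y}" using cut_sub[OF c2] by auto
    then show ?case
      by (simp add: p h_def std_std[OF fY])
  qed
  also have "\<dots> = (\<Sum>(A, B, C)\<in>h ` S. \<phi> (std_restr RR A) (std_restr RR B) (std_restr RR C))"
  proof (rule sum.reindex[symmetric, unfolded comp_def])
    show "inj_on h S"
    proof (rule inj_onI)
      fix p q assume "p \<in> S" "q \<in> S" and hpq: "h p = h q"
      then obtain X Y Y1 Y2 where p: "p = ((X, Y), (Y1, Y2))" and c: "(X, Y) \<in> cuts RR"
        and c2: "(Y1, Y2) \<in> cuts (std_restr RR Y)" unfolding S_def by auto
      from \<open>q \<in> S\<close> obtain X' Y' Y1' Y2' where q: "q = ((X', Y'), (Y1', Y2'))" and c': "(X', Y') \<in> cuts RR"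
        and c2': "(Y1', Y2') \<in> cuts (std_restr RR Y')" unfolding S_def by auto
      have XX: "X = X'" using hpq by (simp add: p q h_def)
      have YY: "Y = Y'" using c c' XX unfolding cuts_iff by blast
      have fY: "finite Y" using cut_finite[OF c] by simp
      have inj: "inj_on (enum Y) {1..card Y}" using enum_bij[OF fY] bij_betw_def by blast
      have s: "Y1 \<subseteq> {1..card Y}" "Y2 \<subseteq> {1..card Y}" "Y1' \<subseteq> {1..card Y}" "Y2' \<subseteq> {1..card Y}"
        using cut_sub[OF c2] cut_sub[OF c2'] YY by auto
      have "enum Y ` Y1 = enum Y ` Y1'" "enum Y ` Y2 = enum Y ` Y2'" using hpq YY by (simp_all add: p q h_def)
      then have "Y1 = Y1'" "Y2 = Y2'" using inj_pre_image[OF inj] s by metis+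
      then show "p = q" using p q XX YY by simp
    qed
  qed
  also have "h ` S = cuts3 RR"
  proof
    show "h ` S \<subseteq> cuts3 RR"
    proof
      fix t assume "t \<in> h ` S"
      then obtain X Y Y1 Y2 where t: "t = (X, enum Y ` Y1, enum Y ` Y2)" and c: "(X, Y) \<in> cuts RR"
        and c2: "(Y1, Y2) \<in> cuts (std_restr RR Y)" unfolding S_def h_def by auto
      have fY: "finite Y" using cut_finite[OF c] by simp
      have bij: "bij_betw (enum Y) {1..card Y} Y" by (rule enum_bij[OF fY])
      from c2[unfolded cut_std_iff[OF fY]] have d: "Y1 \<inter> Y2 = {}" "Y1 \<union> Y2 = {1..card Y}"
        and f: "fwd (snd RR) (enum Y ` Y1) (enum Y ` Y2)" by auto
      have inj: "inj_on (enum Y) {1..card Y}" using bij by (simp add: bij_betw_def)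
      have eY: "enum Y ` {1..card Y} = Y" using bij by (simp add: bij_betw_def)
      have i1: "enum Y ` Y1 \<union> enum Y ` Y2 = Y" using eY d(2) by (simp add: image_Un[symmetric])
      have i2: "enum Y ` Y1 \<inter> enum Y ` Y2 = {}"
        using inj_on_image_Int[OF inj, of Y1 Y2] d by auto
      from c[unfolded cuts_iff] have c1: "X \<inter> Y = {}" and c2': "X \<union> Y = {1..fst RR}"
        and c3: "fwd (snd RR) X Y" by auto
      have s1: "enum Y ` Y1 \<subseteq> Y" "enum Y ` Y2 \<subseteq> Y" using i1 by auto
      have "X \<inter> enum Y ` Y1 = {}" "X \<inter> enum Y ` Y2 = {}" using s1 c1 by auto
      moreover have "X \<union> enum Y ` Y1 \<union> enum Y ` Y2 = {1..fst RR}" using i1 c2' by (simp add: Un_assoc)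
      moreover have "fwd (snd RR) X (enum Y ` Y1)" "fwd (snd RR) X (enum Y ` Y2)"
        using fwd_mono[OF c3 subset_refl] s1 by auto
      ultimately show "t \<in> cuts3 RR" unfolding cuts3_def t using i2 f by simp
    qed
  next
    show "cuts3 RR \<subseteq> h ` S"
    proof
      fix t assume "t \<in> cuts3 RR"
      then obtain A B C where t: "t = (A, B, C)" and d: "A \<inter> B = {}" "A \<inter> C = {}" "B \<inter> C = {}"
        "A \<union> B \<union> C = {1..fst RR}" and f: "fwd (snd RR) A B" "fwd (snd RR) A C" "fwd (snd RR) B C"
        unfolding cuts3_def by auto
      define Y where "Y = B \<union> C"
      have "A \<inter> Y = {}" "A \<union> Y = {1..fst RR}" using d by (auto simp: Y_def)
      moreover have "fwd (snd RR) A Y" using f by (simp add: Y_def fwd_Un2)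
      ultimately have c: "(A, Y) \<in> cuts RR" unfolding cuts_iff by simp
      have fY: "finite Y" using cut_finite[OF c] by simp
      have bij: "bij_betw (enum Y) {1..card Y} Y" by (rule enum_bij[OF fY])
      define Y1 where "Y1 = {i\<in>{1..card Y}. enum Y i \<in> B}"
      define Y2 where "Y2 = {i\<in>{1..card Y}. enum Y i \<in> C}"
      have e1: "enum Y ` Y1 = B" unfolding Y1_def by (rule bij_pre_image[OF bij]) (simp add: Y_def)
      have e2: "enum Y ` Y2 = C" unfolding Y2_def by (rule bij_pre_image[OF bij]) (simp add: Y_def)
      have "Y1 \<inter> Y2 = {}" using d unfolding Y1_def Y2_def by auto
      moreover have "Y1 \<union> Y2 = {1..card Y}"
      proof -
        have "\<And>i. i \<in> {1..card Y} \<Longrightarrow> enum Y i \<in> B \<union> C" using enum_in[OF fY] by (simp add: Y_def)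
        then show ?thesis unfolding Y1_def Y2_def by blast
      qed
      ultimately have c2: "(Y1, Y2) \<in> cuts (std_restr RR Y)"
        unfolding cut_std_iff[OF fY] e1 e2 using f by simp
      have "h ((A, Y), (Y1, Y2)) = t" by (simp add: h_def e1 e2 t)
      moreover have "((A, Y), (Y1, Y2)) \<in> S" using c c2 by (simp add: S_def)
      ultimately show "t \<in> h ` S" by blast
    qed
  qed
  finally show ?thesis .
qed


definition shift :: "nat \<Rightarrow> (nat \<times> nat) set \<Rightarrow> (nat \<times> nat) set" where
  "shift n S = (\<lambda>(i, j). (i + n, j + n)) ` S"

lemma mem_shift: "(a, b) \<in> shift n S \<longleftrightarrow> n \<le> a \<and> n \<le> b \<and> (a - n, b - n) \<in> S"
proof
  assume "(a, b) \<in> shift n S"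
  then obtain i j where "(i, j) \<in> S" "a = i + n" "b = j + n" unfolding shift_def by auto
  then show "n \<le> a \<and> n \<le> b \<and> (a - n, b - n) \<in> S" by simp
next
  assume h: "n \<le> a \<and> n \<le> b \<and> (a - n, b - n) \<in> S"
  then have eq: "(a, b) = (\<lambda>(i, j). (i + n, j + n)) (a - n, b - n)" by simp
  show "(a, b) \<in> shift n S" unfolding shift_def by (rule image_eqI[where x="(a - n, b - n)" and f="\<lambda>(i, j). (i + n, j + n)", OF eq]) (use h in simp)
qed

lemma mem_shsh: "(N, T) \<in> shsh (n, R) (m, S) \<longleftrightarrow> N = n + m \<and> (N, T) \<in> IRel N
   \<and> T \<inter> ({1..n} \<times> {1..n}) = R \<and> T \<inter> ({n+1..n+m} \<times> {n+1..n+m}) = shift n S"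
  unfolding shsh_def shift_def by auto

lemma shsh_sub: "shsh RR SS \<subseteq> IRel (fst RR + fst SS)"
  unfolding shsh_def by (auto split: prod.splits)

lemma shsh_irels: "shsh RR SS \<subseteq> irels"
  using shsh_sub unfolding irels_def by blast

lemma finite_IRel: "finite (IRel n)"
proof -
  have "IRel n \<subseteq> Pair n ` Pow ({1..n} \<times> {1..n})" unfolding IRel_def by auto
  then show ?thesis by (rule finite_subset) simp
qed

lemma finite_shsh: "finite (shsh RR SS)"
  using shsh_sub finite_IRel finite_subset by blast

lemma fst_shsh: "T \<in> shsh RR SS \<Longrightarrow> fst T = fst RR + fst SS"
proof -
  assume "T \<in> shsh RR SS"
  then have "T \<in> IRel (fst RR + fst SS)" using shsh_sub by blast
  then show ?thesis unfolding IRel_def by auto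
qed

lemma mb_eq: "mult_basis R S = (\<lambda>T. if T \<in> shsh R S then 1 else 0)"
  unfolding mult_basis_def by simp

lemma fsupp_mb: "fsupp (mult_basis R S :: irel \<Rightarrow> 'k::zero_neq_one) = shsh R S"
  unfolding mult_basis_def fsupp_def by auto

lemma mb_fs: "(mult_basis R S :: irel \<Rightarrow> 'k::zero_neq_one) \<in> fs_on irels"
  by (simp add: fs_on_def fsupp_mb finite_shsh shsh_irels)

lemma irels_pair: "(n, R) \<in> irels \<longleftrightarrow> R \<subseteq> {1..n} \<times> {1..n} \<and> (\<forall>i\<in>{1..n}. (i, i) \<in> R)"
  unfolding irels_iff by simp

lemma shsh_empty_left: "SS \<in> irels \<Longrightarrow> shsh empty_irel SS = {SS}"
proof -
  assume S: "SS \<in> irels"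
  obtain m S where SS: "SS = (m, S)" by (cases SS)
  have sh0: "shift 0 S = S" unfolding shift_def by simp
  have "(N, T) \<in> shsh (0, {}) (m, S) \<longleftrightarrow> (N, T) = (m, S)" for N T
  proof
    assume "(N, T) \<in> shsh (0, {}) (m, S)"
    then have "N = m" "T \<subseteq> {1..m} \<times> {1..m}" "T \<inter> ({1..m} \<times> {1..m}) = S"
      unfolding mem_shsh sh0 IRel_iff by auto
    then show "(N, T) = (m, S)" by auto
  next
    assume "(N, T) = (m, S)"
    then show "(N, T) \<in> shsh (0, {}) (m, S)" using S unfolding mem_shsh sh0 IRel_iff SS irels_pair by auto
  qed
  then show ?thesis unfolding SS empty_irel_def by auto
qed

lemma shsh_empty_right: "RR \<in> irels \<Longrightarrow> shsh RR empty_irel = {RR}"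
proof -
  assume R: "RR \<in> irels"
  obtain n R where RR: "RR = (n, R)" by (cases RR)
  have "(N, T) \<in> shsh (n, R) (0, {}) \<longleftrightarrow> (N, T) = (n, R)" for N T
  proof
    assume "(N, T) \<in> shsh (n, R) (0, {})"
    then have "N = n" "T \<subseteq> {1..n} \<times> {1..n}" "T \<inter> ({1..n} \<times> {1..n}) = R"
      unfolding mem_shsh IRel_iff by auto
    then show "(N, T) = (n, R)" by auto
  next
    assume "(N, T) = (n, R)"
    then show "(N, T) \<in> shsh (n, R) (0, {})" using R unfolding mem_shsh IRel_iff RR irels_pair shift_def by auto
  qed
  then show ?thesis unfolding RR empty_irel_def by auto
qed

definition sh3 :: "irel \<Rightarrow> irel \<Rightarrow> irel \<Rightarrow> irel set" where
  "sh3 RR SS UU = (case RR of (n, R) \<Rightarrow> case SS of (m, S) \<Rightarrow> case UU of (p, U) \<Rightarrow>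
     {(n + m + p, T) | T. (n + m + p, T) \<in> IRel (n + m + p)
        \<and> T \<inter> ({1..n} \<times> {1..n}) = R
        \<and> T \<inter> ({n+1..n+m} \<times> {n+1..n+m}) = shift n S
        \<and> T \<inter> ({n+m+1..n+m+p} \<times> {n+m+1..n+m+p}) = shift (n + m) U})"

lemma mem_sh3: "(N, T) \<in> sh3 (n, R) (m, S) (p, U) \<longleftrightarrow> N = n + m + p \<and> (N, T) \<in> IRel N
        \<and> T \<inter> ({1..n} \<times> {1..n}) = R
        \<and> T \<inter> ({n+1..n+m} \<times> {n+1..n+m}) = shift n S
        \<and> T \<inter> ({n+m+1..n+m+p} \<times> {n+m+1..n+m+p}) = shift (n + m) U"
  unfolding sh3_def by auto

lemma sum_indicator_unique:
  assumes "finite A" "\<And>x. x \<in> A \<Longrightarrow> P x \<Longrightarrow> x = w" "Q \<longleftrightarrow> (w \<in> A \<and> P w)"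
  shows "(\<Sum>x\<in>A. (if P x then 1 else 0) :: 'k::comm_semiring_1) = (if Q then 1 else 0)"
proof -
  have "(\<Sum>x\<in>A. (if P x then 1 else 0) :: 'k) = (\<Sum>x\<in>A. if x = w \<and> P w then 1 else 0)"
  proof (rule sum.cong[OF refl])
    fix x assume x: "x \<in> A"
    show "(if P x then 1 else 0) = (if x = w \<and> P w then 1 else 0)"
    proof (cases "P x")
      case True
      then have "x = w" using assms(2)[OF x] by blast
      then show ?thesis using True by simp
    next
      case False
      then show ?thesis by auto
    qed
  qed
  also have "\<dots> = (if w \<in> A \<and> P w then 1 else 0)"
    using assms(1) by (cases "P w") (simp_all add: sum.delta)
  finally show ?thesis using assms(3) by simp
qed

lemma assoc_left:
  assumes "(n, R) \<in> irels" "(m, S) \<in> irels" "(p, U) \<in> irels"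
  shows "(\<Sum>W\<in>shsh (n, R) (m, S). mult_basis W (p, U) TT :: 'k::comm_semiring_1)
       = (if TT \<in> sh3 (n, R) (m, S) (p, U) then 1 else 0)"
proof -
  obtain N T where TT: "TT = (N, T)" by (cases TT)
  let ?w = "(n + m, T \<inter> ({1..n+m} \<times> {1..n+m}))"
  have "(\<Sum>W\<in>shsh (n, R) (m, S). mult_basis W (p, U) TT :: 'k)
      = (\<Sum>W\<in>shsh (n, R) (m, S). if TT \<in> shsh W (p, U) then 1 else 0)"
    by (simp add: mult_basis_def)
  also have "\<dots> = (if TT \<in> sh3 (n, R) (m, S) (p, U) then 1 else 0)"
  proof (rule sum_indicator_unique[OF finite_shsh])
    fix W assume W: "W \<in> shsh (n, R) (m, S)" "TT \<in> shsh W (p, U)"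
    obtain k Wr where Wk: "W = (k, Wr)" by (cases W)
    from W(1) have k: "k = n + m" and Wsub: "Wr \<subseteq> {1..n+m} \<times> {1..n+m}" unfolding Wk mem_shsh IRel_iff by auto
    from W(2) have "T \<inter> ({1..k} \<times> {1..k}) = Wr" unfolding Wk TT mem_shsh by auto
    then show "W = ?w" using k by (simp add: Wk)
  next
    show "TT \<in> sh3 (n, R) (m, S) (p, U) \<longleftrightarrow> ?w \<in> shsh (n, R) (m, S) \<and> TT \<in> shsh ?w (p, U)"
    proof
      assume T3: "TT \<in> sh3 (n, R) (m, S) (p, U)"
      then have N: "N = n + m + p" and Tsub: "T \<subseteq> {1..N} \<times> {1..N}" and Tref: "\<forall>i\<in>{1..N}. (i, i) \<in> T"
        and t1: "T \<inter> ({1..n} \<times> {1..n}) = R" and t2: "T \<inter> ({n+1..n+m} \<times> {n+1..n+m}) = shift n S"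
        and t3: "T \<inter> ({n+m+1..n+m+p} \<times> {n+m+1..n+m+p}) = shift (n + m) U"
        unfolding TT mem_sh3 IRel_iff by auto
      have sq1: "({1..n+m} \<times> {1..n+m}) \<inter> ({1..n} \<times> {1..n}) = {1..n} \<times> {1..n}" by auto
      have sq2: "({1..n+m} \<times> {1..n+m}) \<inter> ({n+1..n+m} \<times> {n+1..n+m}) = {n+1..n+m} \<times> {n+1..n+m}" by auto
      have "?w \<in> shsh (n, R) (m, S)" unfolding mem_shsh IRel_iff
      proof (intro conjI)
        show "T \<inter> ({1..n + m} \<times> {1..n + m}) \<inter> ({1..n} \<times> {1..n}) = R" unfolding Int_assoc sq1 by (rule t1)
        show "T \<inter> ({1..n + m} \<times> {1..n + m}) \<inter> ({n + 1..n + m} \<times> {n + 1..n + m}) = shift n S" unfolding Int_assoc sq2 by (rule t2)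
        show "\<forall>i\<in>{1..n + m}. (i, i) \<in> T \<inter> ({1..n + m} \<times> {1..n + m})" using Tref N by auto
      qed auto
      moreover have "TT \<in> shsh ?w (p, U)" unfolding TT mem_shsh IRel_iff using N Tsub Tref t3 by auto
      ultimately show "?w \<in> shsh (n, R) (m, S) \<and> TT \<in> shsh ?w (p, U)" by simp
    next
      assume "?w \<in> shsh (n, R) (m, S) \<and> TT \<in> shsh ?w (p, U)"
      then have w1: "?w \<in> shsh (n, R) (m, S)" and w2: "TT \<in> shsh ?w (p, U)" by auto
      from w2 have N: "N = n + m + p" and I: "(N, T) \<in> IRel N"
        and t3: "T \<inter> ({n+m+1..n+m+p} \<times> {n+m+1..n+m+p}) = shift (n + m) U"
        unfolding TT mem_shsh by auto
      from w1 have t1: "T \<inter> ({1..n+m} \<times> {1..n+m}) \<inter> ({1..n} \<times> {1..n}) = R"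
        and t2: "T \<inter> ({1..n+m} \<times> {1..n+m}) \<inter> ({n+1..n+m} \<times> {n+1..n+m}) = shift n S"
        unfolding mem_shsh by auto
      have sq1: "({1..n+m} \<times> {1..n+m}) \<inter> ({1..n} \<times> {1..n}) = {1..n} \<times> {1..n}" by auto
      have sq2: "({1..n+m} \<times> {1..n+m}) \<inter> ({n+1..n+m} \<times> {n+1..n+m}) = {n+1..n+m} \<times> {n+1..n+m}" by auto
      have "T \<inter> ({1..n} \<times> {1..n}) = R" using t1 unfolding Int_assoc sq1 .
      moreover have "T \<inter> ({n+1..n+m} \<times> {n+1..n+m}) = shift n S" using t2 unfolding Int_assoc sq2 .
      ultimately show "TT \<in> sh3 (n, R) (m, S) (p, U)" unfolding TT mem_sh3 using N I t3 by simp
    qed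
  qed
  finally show ?thesis .
qed


lemma shift_inj: "shift n A = shift n B \<Longrightarrow> A = B"
proof -
  assume h: "shift n A = shift n B"
  have "inj (\<lambda>(i::nat, j::nat). (i + n, j + n))" by (auto simp: inj_def)
  then show "A = B" using h unfolding shift_def by (simp add: inj_image_eq_iff)
qed

lemma shift_shift: "shift n (shift m U) = shift (n + m) U"
  unfolding shift_def image_comp by (rule image_cong) (auto simp: add.assoc add.commute[of m n])

lemma mem_img_add: "a \<in> (\<lambda>i. i + n) ` I \<longleftrightarrow> n \<le> a \<and> a - (n::nat) \<in> I"
proof
  assume "n \<le> a \<and> a - n \<in> I"
  then have "a = (a - n) + n" "a - n \<in> I" by auto
  then show "a \<in> (\<lambda>i. i + n) ` I" by (rule image_eqI)
qed auto

lemma shift_unsh: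
  "shift n {(i, j). i \<in> I \<and> j \<in> I \<and> (i + n, j + n) \<in> T} = T \<inter> ((\<lambda>i. i + n) ` I \<times> (\<lambda>i. i + n) ` I)"
proof (rule set_eqI)
  fix x :: "nat \<times> nat"
  obtain a b where x: "x = (a, b)" by (cases x)
  show "x \<in> shift n {(i, j). i \<in> I \<and> j \<in> I \<and> (i + n, j + n) \<in> T} \<longleftrightarrow> x \<in> T \<inter> ((\<lambda>i. i + n) ` I \<times> (\<lambda>i. i + n) ` I)"
    unfolding x mem_shift by (auto simp: mem_img_add)
qed

lemma img_add_ival: "(\<lambda>i. i + n) ` {a..b} = {a + n..b + (n::nat)}"
  by (rule image_add_atLeastAtMost')

lemma unsh_Int: "I' \<subseteq> I \<Longrightarrow> {(i, j). i \<in> I \<and> j \<in> I \<and> (i + n, j + n) \<in> T} \<inter> (I' \<times> I')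
   = {(i, j). i \<in> I' \<and> j \<in> I' \<and> (i + n, j + n) \<in> T}"
  by auto

lemma assoc_right:
  assumes "(n, R) \<in> irels" "(m, S) \<in> irels" "(p, U) \<in> irels"
  shows "(\<Sum>W\<in>shsh (m, S) (p, U). mult_basis (n, R) W TT :: 'k::comm_semiring_1)
       = (if TT \<in> sh3 (n, R) (m, S) (p, U) then 1 else 0)"
proof -
  obtain N T where TT: "TT = (N, T)" by (cases TT)
  define un where "un I = {(i, j). i \<in> I \<and> j \<in> I \<and> (i + n, j + n) \<in> T}" for I
  let ?w = "(m + p, un {1..m+p})"
  have sh_un: "shift n (un {a..b}) = T \<inter> ({a+n..b+n} \<times> {a+n..b+n})" for a b
    unfolding un_def shift_unsh img_add_ival ..
  have un_Int: "un {1..m+p} \<inter> ({a..b} \<times> {a..b}) = un {a..b}" if "{a..b} \<subseteq> {1..m+p}" for a b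
    unfolding un_def using unsh_Int[OF that] .
  have "(\<Sum>W\<in>shsh (m, S) (p, U). mult_basis (n, R) W TT :: 'k)
      = (\<Sum>W\<in>shsh (m, S) (p, U). if TT \<in> shsh (n, R) W then 1 else 0)"
    by (simp add: mult_basis_def)
  also have "\<dots> = (if TT \<in> sh3 (n, R) (m, S) (p, U) then 1 else 0)"
  proof (rule sum_indicator_unique[OF finite_shsh])
    fix W assume W: "W \<in> shsh (m, S) (p, U)" "TT \<in> shsh (n, R) W"
    obtain k Wr where Wk: "W = (k, Wr)" by (cases W)
    from W(1) have k: "k = m + p" and Wsub: "Wr \<subseteq> {1..m+p} \<times> {1..m+p}" unfolding Wk mem_shsh IRel_iff by auto
    from W(2) have "T \<inter> ({n+1..n+k} \<times> {n+1..n+k}) = shift n Wr" unfolding Wk TT mem_shsh by auto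
    then have "shift n (un {1..m+p}) = shift n Wr" using k sh_un[of 1 "m+p"] by (simp add: add.commute)
    then have "un {1..m+p} = Wr" by (rule shift_inj)
    then show "W = ?w" using k by (simp add: Wk)
  next
    have sq1: "{1..m} \<subseteq> {1..m+p}" "{m+1..m+p} \<subseteq> {1..m+p}" by auto
    have e1: "shift n (un {1..m+p} \<inter> ({1..m} \<times> {1..m})) = T \<inter> ({n+1..n+m} \<times> {n+1..n+m})"
      unfolding un_Int[OF sq1(1)] sh_un by (simp add: add.commute)
    have e2: "shift n (un {1..m+p} \<inter> ({m+1..m+p} \<times> {m+1..m+p})) = T \<inter> ({n+m+1..n+m+p} \<times> {n+m+1..n+m+p})"
      unfolding un_Int[OF sq1(2)] sh_un by (simp add: add_ac)
    have e0: "shift n (un {1..m+p}) = T \<inter> ({n+1..n+(m+p)} \<times> {n+1..n+(m+p)})"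
      unfolding sh_un by (simp add: add_ac)
    have i1: "un {1..m+p} \<inter> ({1..m} \<times> {1..m}) = S \<longleftrightarrow> T \<inter> ({n+1..n+m} \<times> {n+1..n+m}) = shift n S"
      using e1 shift_inj by metis
    have i2: "un {1..m+p} \<inter> ({m+1..m+p} \<times> {m+1..m+p}) = shift m U \<longleftrightarrow>
        T \<inter> ({n+m+1..n+m+p} \<times> {n+m+1..n+m+p}) = shift (n + m) U"
      using e2 shift_inj shift_shift by metis
    have usub: "un {1..m+p} \<subseteq> {1..m+p} \<times> {1..m+p}" unfolding un_def by auto
    show "TT \<in> sh3 (n, R) (m, S) (p, U) \<longleftrightarrow> ?w \<in> shsh (m, S) (p, U) \<and> TT \<in> shsh (n, R) ?w"
    proof
      assume T3: "TT \<in> sh3 (n, R) (m, S) (p, U)"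
      then have N: "N = n + m + p" and Tsub: "T \<subseteq> {1..N} \<times> {1..N}" and Tref: "\<forall>i\<in>{1..N}. (i, i) \<in> T"
        and t1: "T \<inter> ({1..n} \<times> {1..n}) = R" and t2: "T \<inter> ({n+1..n+m} \<times> {n+1..n+m}) = shift n S"
        and t3: "T \<inter> ({n+m+1..n+m+p} \<times> {n+m+1..n+m+p}) = shift (n + m) U"
        unfolding TT mem_sh3 IRel_iff by auto
      have ref: "\<forall>i\<in>{1..m+p}. (i, i) \<in> un {1..m+p}" unfolding un_def using Tref N by auto
      have "?w \<in> shsh (m, S) (p, U)" unfolding mem_shsh IRel_iff
        using usub ref i1 i2 t2 t3 by simp
      moreover have "TT \<in> shsh (n, R) ?w" unfolding TT mem_shsh IRel_iff
        using N Tsub Tref t1 e0 by (simp add: add.assoc)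
      ultimately show "?w \<in> shsh (m, S) (p, U) \<and> TT \<in> shsh (n, R) ?w" by simp
    next
      assume "?w \<in> shsh (m, S) (p, U) \<and> TT \<in> shsh (n, R) ?w"
      then have w1: "?w \<in> shsh (m, S) (p, U)" and w2: "TT \<in> shsh (n, R) ?w" by auto
      from w2 have N: "N = n + (m + p)" and I: "(N, T) \<in> IRel N"
        and t1: "T \<inter> ({1..n} \<times> {1..n}) = R"
        unfolding TT mem_shsh by auto
      from w1 have u1: "un {1..m+p} \<inter> ({1..m} \<times> {1..m}) = S"
        and u2: "un {1..m+p} \<inter> ({m+1..m+p} \<times> {m+1..m+p}) = shift m U"
        unfolding mem_shsh by auto
      show "TT \<in> sh3 (n, R) (m, S) (p, U)" unfolding TT mem_sh3
        using N I t1 u1 u2 i1 i2 by (simp add: add.assoc)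
    qed
  qed
  finally show ?thesis .
qed


lemma fs_finite: "a \<in> fs_on A \<Longrightarrow> finite (fsupp a)"
  unfolding fs_on_def by simp

lemma fs_sub: "a \<in> fs_on A \<Longrightarrow> x \<in> fsupp a \<Longrightarrow> x \<in> A"
  unfolding fs_on_def by auto

lemma bas_fs: "x \<in> A \<Longrightarrow> (bas x :: 'a \<Rightarrow> 'k::zero_neq_one) \<in> fs_on A"
  unfolding fs_on_def by simp

lemma mult_closed:
  fixes a b :: "irel \<Rightarrow> 'k::comm_ring_1"
  assumes "a \<in> fs_on irels" "b \<in> fs_on irels"
  shows "mult a b \<in> fs_on irels"
  unfolding mult_def
  by (rule lin_fs_on[OF fs_finite[OF assms(1)]], rule lin_fs_on[OF fs_finite[OF assms(2)]], rule mb_fs)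

lemma mult_bas_bas: "mult (bas R) (bas S) = (mult_basis R S :: irel \<Rightarrow> 'k::comm_ring_1)"
  unfolding mult_def by simp

lemma mult_assoc:
  fixes a b c :: "irel \<Rightarrow> 'k::comm_ring_1"
  assumes a: "a \<in> fs_on irels" and b: "b \<in> fs_on irels" and c: "c \<in> fs_on irels"
  shows "mult (mult a b) c = mult a (mult b c)"
proof -
  have fa: "finite (fsupp a)" and fb: "finite (fsupp b)" and fc: "finite (fsupp c)"
    using a b c by (simp_all add: fs_finite)
  have fmb: "finite (fsupp (mult_basis R S :: irel \<Rightarrow> 'k))" for R S
    using mb_fs fs_finite by blast
  have flin: "finite (fsupp (lin (mult_basis R) d))" if "d \<in> fs_on irels" for R and d :: "irel \<Rightarrow> 'k"
    using lin_fs_on[OF fs_finite[OF that], of "mult_basis R" irels] mb_fs fs_finite by blast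
  have key: "lin (\<lambda>W. mult_basis W U) (mult_basis R S) = (lin (mult_basis R) (mult_basis S U) :: irel \<Rightarrow> 'k)"
    if "R \<in> irels" "S \<in> irels" "U \<in> irels" for R S U
  proof -
    obtain n Rr where R: "R = (n, Rr)" by (cases R)
    obtain m Sr where S: "S = (m, Sr)" by (cases S)
    obtain p Ur where U: "U = (p, Ur)" by (cases U)
    have "lin (\<lambda>W. mult_basis W U) (mult_basis R S) = (\<lambda>T. \<Sum>W\<in>shsh R S. mult_basis W U T :: 'k)"
      unfolding mb_eq[of R S] by (rule lin_indicator[OF finite_shsh])
    also have "\<dots> = (\<lambda>T. if T \<in> sh3 R S U then 1 else 0)"
      unfolding R S U by (intro ext assoc_left) (use that in \<open>simp_all add: R S U\<close>)
    also have "\<dots> = (\<lambda>T. \<Sum>W\<in>shsh S U. mult_basis R W T :: 'k)"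
      unfolding R S U by (intro ext assoc_right[symmetric]) (use that in \<open>simp_all add: R S U\<close>)
    also have "\<dots> = lin (mult_basis R) (mult_basis S U)"
      unfolding mb_eq[of S U] by (rule lin_indicator[OF finite_shsh, symmetric])
    finally show ?thesis .
  qed
  have "mult (mult a b) c = lin (\<lambda>W. lin (mult_basis W) c) (lin (\<lambda>R. lin (mult_basis R) b) a)"
    unfolding mult_def ..
  also have "\<dots> = lin (\<lambda>R. lin (\<lambda>W. lin (mult_basis W) c) (lin (mult_basis R) b)) a"
    by (rule lin_lin[OF fa flin[OF b]])
  also have "\<dots> = lin (\<lambda>R. lin (\<lambda>S. lin (\<lambda>U. lin (\<lambda>W. mult_basis W U) (mult_basis R S)) c) b) a"
  proof (rule lin_cong)
    fix R assume "R \<in> fsupp a"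
    have "lin (\<lambda>W. lin (mult_basis W) c) (lin (mult_basis R) b)
        = lin (\<lambda>S. lin (\<lambda>W. lin (mult_basis W) c) (mult_basis R S)) b"
      by (rule lin_lin[OF fb fmb])
    also have "\<dots> = lin (\<lambda>S. lin (\<lambda>U. lin (\<lambda>W. mult_basis W U) (mult_basis R S)) c) b"
      by (rule lin_cong) (rule lin_swap)
    finally show "lin (\<lambda>W. lin (mult_basis W) c) (lin (mult_basis R) b)
        = lin (\<lambda>S. lin (\<lambda>U. lin (\<lambda>W. mult_basis W U) (mult_basis R S)) c) b" .
  qed
  also have "\<dots> = lin (\<lambda>R. lin (\<lambda>S. lin (\<lambda>U. lin (mult_basis R) (mult_basis S U)) c) b) a"
  proof (rule lin_cong, rule lin_cong, rule lin_cong)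
    fix R S U assume h: "R \<in> fsupp a" "S \<in> fsupp b" "U \<in> fsupp c"
    have "R \<in> irels" by (rule fs_sub[OF a h(1)])
    moreover have "S \<in> irels" by (rule fs_sub[OF b h(2)])
    moreover have "U \<in> irels" by (rule fs_sub[OF c h(3)])
    ultimately show "lin (\<lambda>W. mult_basis W U) (mult_basis R S) = (lin (mult_basis R) (mult_basis S U) :: irel \<Rightarrow> 'k)"
      by (rule key)
  qed
  also have "\<dots> = lin (\<lambda>R. lin (mult_basis R) (lin (\<lambda>S. lin (mult_basis S) c) b)) a"
  proof (rule lin_cong)
    fix R assume "R \<in> fsupp a"
    have "lin (mult_basis R) (lin (\<lambda>S. lin (mult_basis S) c) b)
        = lin (\<lambda>S. lin (mult_basis R) (lin (mult_basis S) c)) b"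
      by (rule lin_lin[OF fb flin[OF c]])
    also have "\<dots> = lin (\<lambda>S. lin (\<lambda>U. lin (mult_basis R) (mult_basis S U)) c) b"
      by (rule lin_cong) (rule lin_lin[OF fc fmb])
    finally show "lin (\<lambda>S. lin (\<lambda>U. lin (mult_basis R) (mult_basis S U)) c) b
        = lin (mult_basis R) (lin (\<lambda>S. lin (mult_basis S) c) b)" by simp
  qed
  also have "\<dots> = mult a (mult b c)"
    unfolding mult_def ..
  finally show ?thesis .
qed

lemma mb_empty_left: "S \<in> irels \<Longrightarrow> mult_basis empty_irel S = bas S"
  unfolding mb_eq shsh_empty_left bas_def by auto

lemma mb_empty_right: "R \<in> irels \<Longrightarrow> mult_basis R empty_irel = bas R"
  unfolding mb_eq shsh_empty_right bas_def by auto

lemma mult_unit_left: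
  fixes a :: "irel \<Rightarrow> 'k::comm_ring_1"
  assumes a: "a \<in> fs_on irels"
  shows "mult (bas empty_irel) a = a"
proof -
  have "mult (bas empty_irel) a = lin (mult_basis empty_irel) a" unfolding mult_def by simp
  also have "\<dots> = lin bas a" by (rule lin_cong, rule mb_empty_left, rule fs_sub[OF a])
  also have "\<dots> = a" by (rule lin_bas_id[OF fs_finite[OF a]])
  finally show ?thesis .
qed

lemma mult_unit_right:
  fixes a :: "irel \<Rightarrow> 'k::comm_ring_1"
  assumes a: "a \<in> fs_on irels"
  shows "mult a (bas empty_irel) = a"
proof -
  have "mult a (bas empty_irel) = lin (\<lambda>R. mult_basis R empty_irel) a" unfolding mult_def by simp
  also have "\<dots> = lin bas a" by (rule lin_cong, rule mb_empty_right, rule fs_sub[OF a])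
  also have "\<dots> = a" by (rule lin_bas_id[OF fs_finite[OF a]])
  finally show ?thesis .
qed

lemma empty_irels: "empty_irel \<in> irels"
  unfolding empty_irel_def irels_iff by simp


definition gstd :: "irel \<Rightarrow> nat set \<times> nat set \<Rightarrow> irel \<times> irel" where
  "gstd R c = (std_restr R (fst c), std_restr R (snd c))"

lemma cop_basis_eq: "cop_basis R = (\<lambda>z. of_nat (card {c\<in>cuts R. gstd R c = z}))"
proof
  fix z :: "irel \<times> irel"
  obtain U V where z: "z = (U, V)" by (cases z)
  have "{(X, Y). total_cut R X Y \<and> std_restr R X = U \<and> std_restr R Y = V} = {c\<in>cuts R. gstd R c = z}"
    unfolding z cuts_def gstd_def by auto
  then show "cop_basis R z = of_nat (card {c\<in>cuts R. gstd R c = z})"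
    unfolding cop_basis_def z by simp
qed

lemma lin_cop_basis:
  fixes F :: "irel \<times> irel \<Rightarrow> 'b \<Rightarrow> 'k::comm_semiring_1"
  shows "lin F (cop_basis R) = (\<lambda>y. \<Sum>c\<in>cuts R. F (gstd R c) y)"
  unfolding cop_basis_eq by (rule lin_count[OF finite_cuts])

lemma fsupp_cop_basis: "fsupp (cop_basis R :: irel \<times> irel \<Rightarrow> 'k::comm_semiring_1) \<subseteq> gstd R ` cuts R"
proof
  fix z assume "z \<in> fsupp (cop_basis R :: irel \<times> irel \<Rightarrow> 'k)"
  then have "card {c\<in>cuts R. gstd R c = z} \<noteq> 0" unfolding fsupp_def cop_basis_eq
    by (intro notI) simp
  then have "{c\<in>cuts R. gstd R c = z} \<noteq> {}" by (intro notI) simp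
  then show "z \<in> gstd R ` cuts R" by blast
qed

lemma gstd_irels: "R \<in> irels \<Longrightarrow> c \<in> cuts R \<Longrightarrow> gstd R c \<in> irels \<times> irels"
  unfolding gstd_def using cut_sub std_irels by (cases c) auto

lemma cop_basis_fs: "R \<in> irels \<Longrightarrow> (cop_basis R :: irel \<times> irel \<Rightarrow> 'k::comm_semiring_1) \<in> fs_on (irels \<times> irels)"
proof -
  assume R: "R \<in> irels"
  have s: "gstd R ` cuts R \<subseteq> irels \<times> irels" using gstd_irels[OF R] by blast
  have f: "finite (gstd R ` cuts R)" using finite_cuts by simp
  show ?thesis unfolding fs_on_def using fsupp_cop_basis[of R] s f
    by (auto intro: finite_subset)
qed

lemma cop_basis_finite: "finite (fsupp (cop_basis R :: irel \<times> irel \<Rightarrow> 'k::comm_semiring_1))"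
  using fsupp_cop_basis finite_cuts finite_subset by blast

lemma cop_closed:
  fixes a :: "irel \<Rightarrow> 'k::comm_ring_1"
  assumes a: "a \<in> fs_on irels"
  shows "cop a \<in> fs_on (irels \<times> irels)"
  unfolding cop_def
  by (rule lin_fs_on[OF fs_finite[OF a]], rule cop_basis_fs, rule fs_sub[OF a])

lemma cop_bas: "cop (bas R) = cop_basis R"
  unfolding cop_def by simp

lemma cop_basis_sum: "(cop_basis R :: irel \<times> irel \<Rightarrow> 'k::comm_semiring_1) = (\<lambda>y. \<Sum>c\<in>cuts R. bas (gstd R c) y)"
proof -
  have "(cop_basis R :: irel \<times> irel \<Rightarrow> 'k) = lin bas (cop_basis R)"
    by (rule lin_bas_id[symmetric, OF cop_basis_finite])
  also have "\<dots> = (\<lambda>y. \<Sum>c\<in>cuts R. bas (gstd R c) y)" by (rule lin_cop_basis)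
  finally show ?thesis .
qed

lemma bas_pair: "(bas (a, b) (x, y) :: 'k::comm_semiring_1) = bas a x * bas b y"
  unfolding bas_def by auto

lemma coassoc_basis:
  assumes R: "R \<in> irels"
  shows "lin (\<lambda>(P, Q) (U, V, W). cop_basis P (U, V) * bas Q W) (cop_basis R)
       = (lin (\<lambda>(P, Q) (U, V, W). bas P U * cop_basis Q (V, W)) (cop_basis R) :: _ \<Rightarrow> 'k::comm_semiring_1)"
proof
  fix y :: "irel \<times> irel \<times> irel"
  obtain U V W where y: "y = (U, V, W)" by (cases y)
  have "lin (\<lambda>(P, Q) (U, V, W). cop_basis P (U, V) * bas Q W) (cop_basis R) y
      = (\<Sum>c\<in>cuts R. (\<lambda>(P, Q) (U, V, W). (cop_basis P (U, V) :: 'k) * bas Q W) (gstd R c) y)"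
    unfolding lin_cop_basis ..
  also have "\<dots> = (\<Sum>(X, Y)\<in>cuts R. \<Sum>(X1, X2)\<in>cuts (std_restr R X).
     (bas (std_restr (std_restr R X) X1, std_restr (std_restr R X) X2, std_restr R Y) (U, V, W) :: 'k))"
  proof (rule sum.cong[OF refl], goal_cases)
    case (1 c)
    obtain X Y where c: "c = (X, Y)" by (cases c)
    show ?case unfolding c y gstd_def
      by (simp add: sum_distrib_right split_def gstd_def bas_pair cop_basis_sum mult.assoc)
  qed
  also have "\<dots> = (\<Sum>(A, B, C)\<in>cuts3 R. bas (std_restr R A, std_restr R B, std_restr R C) (U, V, W))"
    by (rule coassoc_left_sum)
  also have "\<dots> = (\<Sum>(X, Y)\<in>cuts R. \<Sum>(Y1, Y2)\<in>cuts (std_restr R Y).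
     (bas (std_restr R X, std_restr (std_restr R Y) Y1, std_restr (std_restr R Y) Y2) (U, V, W) :: 'k))"
    by (rule coassoc_right_sum[symmetric])
  also have "\<dots> = (\<Sum>c\<in>cuts R. (\<lambda>(P, Q) (U, V, W). bas P U * (cop_basis Q (V, W) :: 'k)) (gstd R c) y)"
  proof (rule sum.cong[OF refl], goal_cases)
    case (1 c)
    obtain X Y where c: "c = (X, Y)" by (cases c)
    show ?case unfolding c y gstd_def
      by (simp add: sum_distrib_left split_def gstd_def bas_pair cop_basis_sum)
  qed
  also have "\<dots> = lin (\<lambda>(P, Q) (U, V, W). bas P U * cop_basis Q (V, W)) (cop_basis R) y"
    unfolding lin_cop_basis ..
  finally show "lin (\<lambda>(P, Q) (U, V, W). cop_basis P (U, V) * bas Q W) (cop_basis R) y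
       = (lin (\<lambda>(P, Q) (U, V, W). bas P U * cop_basis Q (V, W)) (cop_basis R) y :: 'k)" .
qed

lemma coassoc:
  fixes a :: "irel \<Rightarrow> 'k::comm_ring_1"
  assumes a: "a \<in> fs_on irels"
  shows "cop_l (cop a) = cop_r (cop a)"
proof -
  have "cop_l (cop a) = lin (\<lambda>R. lin (\<lambda>(P, Q) (U, V, W). cop_basis P (U, V) * bas Q W) (cop_basis R)) a"
    unfolding cop_l_def cop_def by (rule lin_lin[OF fs_finite[OF a] cop_basis_finite])
  also have "\<dots> = lin (\<lambda>R. lin (\<lambda>(P, Q) (U, V, W). bas P U * cop_basis Q (V, W)) (cop_basis R)) a"
    by (rule lin_cong, rule coassoc_basis, rule fs_sub[OF a])
  also have "\<dots> = cop_r (cop a)"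
    unfolding cop_r_def cop_def by (rule lin_lin[OF fs_finite[OF a] cop_basis_finite, symmetric])
  finally show ?thesis .
qed


lemma cut_left_empty: "({}, {1..fst R}) \<in> cuts R"
  unfolding cuts_iff fwd_def by simp

lemma cut_right_empty: "({1..fst R}, {}) \<in> cuts R"
  unfolding cuts_iff fwd_def by simp

lemma cut_X_empty: "(X, Y) \<in> cuts R \<Longrightarrow> X = {} \<Longrightarrow> Y = {1..fst R}"
  unfolding cuts_iff by simp

lemma cut_Y_empty: "(X, Y) \<in> cuts R \<Longrightarrow> Y = {} \<Longrightarrow> X = {1..fst R}"
  unfolding cuts_iff by simp

lemma bas_empty_std: "(X, Y) \<in> cuts R \<Longrightarrow> (bas empty_irel (std_restr R X) :: 'k::zero_neq_one) = (if X = {} then 1 else 0)"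
  unfolding bas_def using std_eq_empty_iff[of X R] cut_finite[of X Y R] by auto

lemma bas_empty_std2: "(X, Y) \<in> cuts R \<Longrightarrow> (bas empty_irel (std_restr R Y) :: 'k::zero_neq_one) = (if Y = {} then 1 else 0)"
  unfolding bas_def using std_eq_empty_iff[of Y R] cut_finite[of X Y R] by auto

lemma counit_left_basis:
  assumes R: "R \<in> irels"
  shows "lin (\<lambda>(P, Q) W. bas empty_irel P * bas Q W) (cop_basis R) = (bas R :: irel \<Rightarrow> 'k::comm_semiring_1)"
proof
  fix W
  have "lin (\<lambda>(P, Q) W. bas empty_irel P * bas Q W) (cop_basis R) W
      = (\<Sum>c\<in>cuts R. (\<lambda>(P, Q) W. bas empty_irel P * bas Q W) (gstd R c) W :: 'k)"
    unfolding lin_cop_basis ..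
  also have "\<dots> = (\<Sum>c\<in>cuts R. if c = ({}, {1..fst R}) then bas (std_restr R (snd c)) W else 0)"
  proof (rule sum.cong[OF refl])
    fix c assume c: "c \<in> cuts R"
    obtain X Y where cXY: "c = (X, Y)" by (cases c)
    show "(\<lambda>(P, Q) W. bas empty_irel P * bas Q W) (gstd R c) W =
        (if c = ({}, {1..fst R}) then bas (std_restr R (snd c)) W else (0 :: 'k))"
      using bas_empty_std[of X Y R, where 'k='k] c cut_X_empty[of X Y R] by (auto simp: cXY gstd_def)
  qed
  also have "\<dots> = bas (std_restr R {1..fst R}) W" using cut_left_empty[of R]
    by (simp add: sum.delta[OF finite_cuts])
  also have "\<dots> = bas R W" using std_full[OF R] by simp
  finally show "lin (\<lambda>(P, Q) W. bas empty_irel P * bas Q W) (cop_basis R) W = (bas R W :: 'k)" .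
qed

lemma counit_right_basis:
  assumes R: "R \<in> irels"
  shows "lin (\<lambda>(P, Q) U. bas P U * bas empty_irel Q) (cop_basis R) = (bas R :: irel \<Rightarrow> 'k::comm_semiring_1)"
proof
  fix W
  have "lin (\<lambda>(P, Q) U. bas P U * bas empty_irel Q) (cop_basis R) W
      = (\<Sum>c\<in>cuts R. (\<lambda>(P, Q) U. bas P U * bas empty_irel Q) (gstd R c) W :: 'k)"
    unfolding lin_cop_basis ..
  also have "\<dots> = (\<Sum>c\<in>cuts R. if c = ({1..fst R}, {}) then bas (std_restr R (fst c)) W else 0)"
  proof (rule sum.cong[OF refl])
    fix c assume c: "c \<in> cuts R"
    obtain X Y where cXY: "c = (X, Y)" by (cases c)
    show "(\<lambda>(P, Q) U. bas P U * bas empty_irel Q) (gstd R c) W =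
        (if c = ({1..fst R}, {}) then bas (std_restr R (fst c)) W else (0 :: 'k))"
      using bas_empty_std2[of X Y R, where 'k='k] c cut_Y_empty[of X Y R] by (auto simp: cXY gstd_def)
  qed
  also have "\<dots> = bas (std_restr R {1..fst R}) W" using cut_right_empty[of R]
    by (simp add: sum.delta[OF finite_cuts])
  also have "\<dots> = bas R W" using std_full[OF R] by simp
  finally show "lin (\<lambda>(P, Q) U. bas P U * bas empty_irel Q) (cop_basis R) W = (bas R W :: 'k)" .
qed

lemma counit_left:
  fixes a :: "irel \<Rightarrow> 'k::comm_ring_1"
  assumes a: "a \<in> fs_on irels"
  shows "lin (\<lambda>(P, Q) W. bas empty_irel P * bas Q W) (cop a) = a"
proof -
  have "lin (\<lambda>(P, Q) W. bas empty_irel P * bas Q W) (cop a)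
      = lin (\<lambda>R. lin (\<lambda>(P, Q) W. bas empty_irel P * bas Q W) (cop_basis R)) a"
    unfolding cop_def by (rule lin_lin[OF fs_finite[OF a] cop_basis_finite])
  also have "\<dots> = lin bas a"
    by (rule lin_cong, rule counit_left_basis, rule fs_sub[OF a])
  also have "\<dots> = a" by (rule lin_bas_id[OF fs_finite[OF a]])
  finally show ?thesis .
qed

lemma counit_right:
  fixes a :: "irel \<Rightarrow> 'k::comm_ring_1"
  assumes a: "a \<in> fs_on irels"
  shows "lin (\<lambda>(P, Q) U. bas P U * bas empty_irel Q) (cop a) = a"
proof -
  have "lin (\<lambda>(P, Q) U. bas P U * bas empty_irel Q) (cop a)
      = lin (\<lambda>R. lin (\<lambda>(P, Q) U. bas P U * bas empty_irel Q) (cop_basis R)) a"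
    unfolding cop_def by (rule lin_lin[OF fs_finite[OF a] cop_basis_finite])
  also have "\<dots> = lin bas a"
    by (rule lin_cong, rule counit_right_basis, rule fs_sub[OF a])
  also have "\<dots> = a" by (rule lin_bas_id[OF fs_finite[OF a]])
  finally show ?thesis .
qed

lemma eps_eq:
  fixes a :: "irel \<Rightarrow> 'k::comm_ring_1"
  assumes "finite (fsupp a)"
  shows "(\<Sum>x\<in>fsupp a. a x * bas empty_irel x) = a empty_irel"
proof -
  have "(\<Sum>x\<in>fsupp a. a x * bas empty_irel x) = (\<Sum>x\<in>fsupp a. if x = empty_irel then a x else 0)"
    by (rule sum.cong) (auto simp: bas_def)
  also have "\<dots> = (if empty_irel \<in> fsupp a then a empty_irel else 0)"
    by (rule sum.delta[OF assms])
  also have "\<dots> = a empty_irel" by (auto simp: fsupp_def)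
  finally show ?thesis .
qed

lemma irels_size0: "R \<in> irels \<Longrightarrow> fst R = 0 \<Longrightarrow> R = empty_irel"
  unfolding irels_iff empty_irel_def by (cases R) auto

lemma empty_in_shsh: "R \<in> irels \<Longrightarrow> S \<in> irels \<Longrightarrow> empty_irel \<in> shsh R S \<longleftrightarrow> R = empty_irel \<and> S = empty_irel"
proof
  assume R: "R \<in> irels" and S: "S \<in> irels" and e: "empty_irel \<in> shsh R S"
  have "fst R + fst S = 0" using fst_shsh[OF e] by (simp add: empty_irel_def)
  then show "R = empty_irel \<and> S = empty_irel" using irels_size0 R S by simp
next
  assume "R \<in> irels" "S \<in> irels" "R = empty_irel \<and> S = empty_irel"
  then show "empty_irel \<in> shsh R S" using shsh_empty_left empty_irels by simp
qed

lemma mult_at_empty: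
  fixes a b :: "irel \<Rightarrow> 'k::comm_ring_1"
  assumes a: "a \<in> fs_on irels" and b: "b \<in> fs_on irels"
  shows "mult a b empty_irel = a empty_irel * b empty_irel"
proof -
  have "mult a b empty_irel = (\<Sum>R\<in>fsupp a. a R * (\<Sum>S\<in>fsupp b. b S * mult_basis R S empty_irel))"
    unfolding mult_def lin_def by simp
  also have "\<dots> = (\<Sum>R\<in>fsupp a. a R * (\<Sum>S\<in>fsupp b. if S = empty_irel then (if R = empty_irel then b S else 0) else 0))"
  proof (rule sum.cong[OF refl], goal_cases)
    case (1 R)
    have "(\<Sum>S\<in>fsupp b. b S * mult_basis R S empty_irel) = (\<Sum>S\<in>fsupp b. if S = empty_irel then (if R = empty_irel then b S else 0) else (0::'k))"
    proof (rule sum.cong[OF refl], goal_cases)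
      case (1 S)
      have "R \<in> irels" "S \<in> irels" using fs_sub[OF a] fs_sub[OF b] 1 \<open>R \<in> fsupp a\<close> by auto
      then show ?case using empty_in_shsh[of R S] by (auto simp: mult_basis_def)
    qed
    then show ?case by simp
  qed
  also have "\<dots> = (\<Sum>R\<in>fsupp a. a R * (if empty_irel \<in> fsupp b then (if R = empty_irel then b empty_irel else 0) else 0))"
    by (simp add: sum.delta[OF fs_finite[OF b]])
  also have "\<dots> = (\<Sum>R\<in>fsupp a. if R = empty_irel then a R * b empty_irel else 0)"
    by (rule sum.cong) (auto simp: fsupp_def)
  also have "\<dots> = a empty_irel * b empty_irel"
    by (simp add: sum.delta[OF fs_finite[OF a]]) (auto simp: fsupp_def)
  finally show ?thesis .
qed

lemma grading_mult:
  "(mult (bas R) (bas S) T :: 'k::comm_ring_1) \<noteq> 0 \<Longrightarrow> fst T = fst R + fst S"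
  unfolding mult_bas_bas mult_basis_def by (auto split: if_splits intro: fst_shsh)

lemma grading_cop:
  assumes "(cop (bas R) (U, W) :: 'k::comm_ring_1) \<noteq> 0"
  shows "fst U + fst W = fst R"
proof -
  have "(U, W) \<in> fsupp (cop_basis R :: _ \<Rightarrow> 'k)" using assms by (simp add: fsupp_def cop_bas)
  then have "(U, W) \<in> gstd R ` cuts R" by (rule subsetD[OF fsupp_cop_basis[of R, where 'k='k]])
  then obtain c where c: "c \<in> cuts R" "gstd R c = (U, W)" by (metis imageE)
  obtain X Y where cXY: "c = (X, Y)" by (cases c)
  have fin: "finite X" "finite Y" using cut_finite c cXY by auto
  from c cXY have "(X, Y) \<in> cuts R" by simp
  then have d: "X \<inter> Y = {}" "X \<union> Y = {1..fst R}" unfolding cuts_iff by blast+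
  have "card X + card Y = card (X \<union> Y)" using card_Un_disjoint[OF fin d(1)] by simp
  then show ?thesis using c cXY d(2) by (auto simp: gstd_def)
qed

lemma cuts_empty: "cuts empty_irel = {({}, {})}"
  unfolding cuts_iff empty_irel_def by (auto simp: cuts_def total_cut_def fwd_def)

lemma cop_empty: "cop (bas empty_irel) = (bas (empty_irel, empty_irel) :: _ \<Rightarrow> 'k::comm_semiring_1)"
  unfolding cop_bas cop_basis_sum cuts_empty by (simp add: gstd_def)


lemma lin_sum_F:
  "lin (\<lambda>x y. \<Sum>i\<in>I. G i x y) a = (\<lambda>y. \<Sum>i\<in>I. lin (G i) a y)"
proof
  fix y show "lin (\<lambda>x y. \<Sum>i\<in>I. G i x y) a y = (\<Sum>i\<in>I. lin (G i) a y)"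
    unfolding lin_def by (simp add: sum_distrib_left) (rule sum.swap)
qed

lemma fs_sum:
  fixes f :: "'i \<Rightarrow> 'a \<Rightarrow> 'k::comm_ring_1"
  assumes "finite I" "\<And>i. i \<in> I \<Longrightarrow> f i \<in> fs_on A"
  shows "(\<lambda>T. \<Sum>i\<in>I. f i T) \<in> fs_on A"
proof -
  have s: "fsupp (\<lambda>T. \<Sum>i\<in>I. f i T) \<subseteq> (\<Union>i\<in>I. fsupp (f i))"
  proof
    fix T assume "T \<in> fsupp (\<lambda>T. \<Sum>i\<in>I. f i T)"
    then have "(\<Sum>i\<in>I. f i T) \<noteq> 0" by (simp add: fsupp_def)
    then obtain i where "i \<in> I" "f i T \<noteq> 0" by (rule sum.not_neutral_contains_not_neutral)
    then show "T \<in> (\<Union>i\<in>I. fsupp (f i))" by (auto simp: fsupp_def)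
  qed
  have "finite (\<Union>i\<in>I. fsupp (f i))" using assms(1) fs_finite[OF assms(2)] by blast
  moreover have "(\<Union>i\<in>I. fsupp (f i)) \<subseteq> A" using fs_sub[OF assms(2)] by blast
  ultimately show ?thesis unfolding fs_on_def using s by (auto intro: finite_subset)
qed

lemma fsupp_uminus: "fsupp (\<lambda>T. - f T :: 'k::comm_ring_1) = fsupp f"
  unfolding fsupp_def by simp

lemma fs_uminus: "f \<in> fs_on A \<Longrightarrow> (\<lambda>T. - f T :: 'k::comm_ring_1) \<in> fs_on A"
  unfolding fs_on_def fsupp_def by simp

lemma fs_zero: "(\<lambda>_. 0 :: 'k::comm_ring_1) \<in> fs_on A"
  unfolding fs_on_def fsupp_def by simp

lemma lin_zero: "lin F (\<lambda>_. 0 :: 'k::comm_ring_1) = (\<lambda>_. 0)"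
  unfolding lin_def fsupp_def by simp

lemma lin_zero_F: "lin (\<lambda>_ _. 0 :: 'k::comm_ring_1) a = (\<lambda>_. 0)"
  unfolding lin_def by simp

lemma lin_uminus: "lin F (\<lambda>T. - f T :: 'k::comm_ring_1) = (\<lambda>y. - lin F f y)"
  unfolding lin_def fsupp_uminus by (simp add: sum_negf)

lemma mult_sum_left:
  fixes f :: "'i \<Rightarrow> irel \<Rightarrow> 'k::comm_ring_1"
  assumes "finite I" "\<And>i. i \<in> I \<Longrightarrow> finite (fsupp (f i))"
  shows "mult (\<lambda>T. \<Sum>i\<in>I. f i T) b = (\<lambda>T. \<Sum>i\<in>I. mult (f i) b T)"
  unfolding mult_def by (rule lin_sum_fun[OF assms])

lemma mult_sum_right:
  fixes g :: "'i \<Rightarrow> irel \<Rightarrow> 'k::comm_ring_1"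
  assumes "finite I" "\<And>i. i \<in> I \<Longrightarrow> finite (fsupp (g i))"
  shows "mult a (\<lambda>T. \<Sum>i\<in>I. g i T) = (\<lambda>T. \<Sum>i\<in>I. mult a (g i) T)"
proof -
  have "mult a (\<lambda>T. \<Sum>i\<in>I. g i T) = lin (\<lambda>R. lin (mult_basis R) (\<lambda>T. \<Sum>i\<in>I. g i T)) a"
    unfolding mult_def ..
  also have "\<dots> = lin (\<lambda>R y. \<Sum>i\<in>I. lin (mult_basis R) (g i) y) a"
    by (rule lin_cong) (rule lin_sum_fun[OF assms])
  also have "\<dots> = (\<lambda>T. \<Sum>i\<in>I. mult a (g i) T)"
    unfolding lin_sum_F mult_def ..
  finally show ?thesis .
qed

lemma mult_uminus_left:
  fixes f :: "irel \<Rightarrow> 'k::comm_ring_1"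
  shows "mult (\<lambda>T. - f T) b = (\<lambda>T. - mult f b T)"
  unfolding mult_def by (rule lin_uminus)

lemma mult_uminus_right:
  fixes g :: "irel \<Rightarrow> 'k::comm_ring_1"
  shows "mult a (\<lambda>T. - g T) = (\<lambda>T. - mult a g T)"
proof -
  have "mult a (\<lambda>T. - g T) = lin (\<lambda>R y. - lin (mult_basis R) g y) a"
    unfolding mult_def by (rule lin_cong) (rule lin_uminus)
  also have "\<dots> = (\<lambda>T. - mult a g T)"
    unfolding mult_def lin_def by (simp add: sum_negf)
  finally show ?thesis .
qed

lemma mult_zero_right: "mult a (\<lambda>_. 0 :: 'k::comm_ring_1) = (\<lambda>_. 0)"
  unfolding mult_def lin_zero lin_zero_F ..

lemma mult_zero_left: "mult (\<lambda>_. 0 :: 'k::comm_ring_1) b = (\<lambda>_. 0)"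
  unfolding mult_def lin_zero ..

definition conv :: "(irel \<Rightarrow> irel \<Rightarrow> 'k::comm_ring_1) \<Rightarrow> (irel \<Rightarrow> irel \<Rightarrow> 'k) \<Rightarrow> irel \<Rightarrow> irel \<Rightarrow> 'k" where
  "conv f g R = (\<lambda>T. \<Sum>c\<in>cuts R. mult (f (std_restr R (fst c))) (g (std_restr R (snd c))) T)"

definition good :: "(irel \<Rightarrow> irel \<Rightarrow> 'k::comm_ring_1) \<Rightarrow> bool" where
  "good f \<longleftrightarrow> (\<forall>P\<in>irels. f P \<in> fs_on irels)"

lemma cut_std_irels: "R \<in> irels \<Longrightarrow> c \<in> cuts R \<Longrightarrow> std_restr R (fst c) \<in> irels \<and> std_restr R (snd c) \<in> irels"
  using cut_sub std_irels by (cases c) auto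

lemma conv_good: "good f \<Longrightarrow> good g \<Longrightarrow> good (conv f g)"
  unfolding good_def conv_def
  by (auto intro!: fs_sum finite_cuts mult_closed dest: cut_std_irels)

lemma conv_cong:
  assumes "\<And>P. P \<in> irels \<Longrightarrow> f P = f' P" "\<And>P. P \<in> irels \<Longrightarrow> g P = g' P" "R \<in> irels"
  shows "conv f g R = conv f' g' R"
  unfolding conv_def using assms cut_std_irels[OF assms(3)] by (auto intro!: sum.cong)

lemma cuts3_sub: "(A, B, C) \<in> cuts3 R \<Longrightarrow> A \<subseteq> {1..fst R} \<and> B \<subseteq> {1..fst R} \<and> C \<subseteq> {1..fst R}"
proof -
  assume "(A, B, C) \<in> cuts3 R"
  then have "A \<union> B \<union> C = {1..fst R}" unfolding cuts3_def by simp
  then show ?thesis by blast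
qed

lemma conv_assoc:
  fixes f g h :: "irel \<Rightarrow> irel \<Rightarrow> 'k::comm_ring_1"
  assumes f: "good f" and g: "good g" and h: "good h" and R: "R \<in> irels"
  shows "conv (conv f g) h R = conv f (conv g h) R"
proof
  fix T
  have fi: "P \<in> irels \<Longrightarrow> f P \<in> fs_on irels" "P \<in> irels \<Longrightarrow> g P \<in> fs_on irels"
    "P \<in> irels \<Longrightarrow> h P \<in> fs_on irels" for P
    using f g h unfolding good_def by auto
  have "conv (conv f g) h R T = (\<Sum>(X, Y)\<in>cuts R. \<Sum>(X1, X2)\<in>cuts (std_restr R X).
     mult (mult (f (std_restr (std_restr R X) X1)) (g (std_restr (std_restr R X) X2))) (h (std_restr R Y)) T)"
    unfolding conv_def split_def
  proof (rule sum.cong[OF refl], goal_cases)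
    case (1 c)
    let ?P = "std_restr R (fst c)"
    have P: "?P \<in> irels" using cut_std_irels[OF R 1] by simp
    have "mult (\<lambda>T. \<Sum>d\<in>cuts ?P. mult (f (std_restr ?P (fst d))) (g (std_restr ?P (snd d))) T) (h (std_restr R (snd c)))
       = (\<lambda>T. \<Sum>d\<in>cuts ?P. mult (mult (f (std_restr ?P (fst d))) (g (std_restr ?P (snd d)))) (h (std_restr R (snd c))) T)"
      by (rule mult_sum_left[OF finite_cuts])
        (use cut_std_irels[OF P] fi in \<open>blast intro: fs_finite mult_closed\<close>)
    then show ?case by simp
  qed
  also have "\<dots> = (\<Sum>(A, B, C)\<in>cuts3 R. mult (mult (f (std_restr R A)) (g (std_restr R B))) (h (std_restr R C)) T)"
    by (rule coassoc_left_sum)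
  also have "\<dots> = (\<Sum>(A, B, C)\<in>cuts3 R. mult (f (std_restr R A)) (mult (g (std_restr R B)) (h (std_restr R C))) T)"
  proof (rule sum.cong[OF refl], goal_cases)
    case (1 t)
    obtain A B C where t: "t = (A, B, C)" by (cases t)
    have "std_restr R A \<in> irels" "std_restr R B \<in> irels" "std_restr R C \<in> irels"
      using cuts3_sub[of A B C R] 1 t std_irels[OF R] by auto
    then have "mult (mult (f (std_restr R A)) (g (std_restr R B))) (h (std_restr R C))
       = mult (f (std_restr R A)) (mult (g (std_restr R B)) (h (std_restr R C)))"
      by (intro mult_assoc fi)
    then show ?case unfolding t by simp
  qed
  also have "\<dots> = (\<Sum>(X, Y)\<in>cuts R. \<Sum>(Y1, Y2)\<in>cuts (std_restr R Y).
     mult (f (std_restr R X)) (mult (g (std_restr (std_restr R Y) Y1)) (h (std_restr (std_restr R Y) Y2))) T)"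
    by (rule coassoc_right_sum[symmetric])
  also have "\<dots> = conv f (conv g h) R T"
    unfolding conv_def split_def
  proof (rule sum.cong[OF refl], goal_cases)
    case (1 c)
    let ?P = "std_restr R (snd c)"
    have P: "?P \<in> irels" using cut_std_irels[OF R 1] by simp
    have "mult (f (std_restr R (fst c))) (\<lambda>T. \<Sum>d\<in>cuts ?P. mult (g (std_restr ?P (fst d))) (h (std_restr ?P (snd d))) T)
       = (\<lambda>T. \<Sum>d\<in>cuts ?P. mult (f (std_restr R (fst c))) (mult (g (std_restr ?P (fst d))) (h (std_restr ?P (snd d)))) T)"
      by (rule mult_sum_right[OF finite_cuts])
        (use cut_std_irels[OF P] fi in \<open>blast intro: fs_finite mult_closed\<close>)
    then show ?case by simp
  qed
  finally show "conv (conv f g) h R T = conv f (conv g h) R T" .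
qed


definition uu :: "irel \<Rightarrow> irel \<Rightarrow> 'k::comm_ring_1" where
  "uu R = (if R = empty_irel then bas empty_irel else (\<lambda>_. 0))"

lemma uu_empty[simp]: "uu empty_irel = bas empty_irel"
  unfolding uu_def by simp

lemma good_uu: "good uu"
  unfolding good_def
proof
  fix P :: irel
  show "uu P \<in> fs_on irels"
  proof (cases "P = empty_irel")
    case True
    then show ?thesis using bas_fs[OF empty_irels] by simp
  next
    case False
    then show ?thesis unfolding uu_def using fs_zero by simp
  qed
qed

lemma good_bas: "good (bas :: irel \<Rightarrow> irel \<Rightarrow> 'k::comm_ring_1)"
  unfolding good_def by (intro ballI bas_fs)

lemma uu_std: "(X, Y) \<in> cuts R \<Longrightarrow> uu (std_restr R Y) = (if Y = {} then bas empty_irel else (\<lambda>_. 0))"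
  unfolding uu_def using std_eq_empty_iff[of Y R] cut_finite[of X Y R] by auto

lemma uu_std1: "(X, Y) \<in> cuts R \<Longrightarrow> uu (std_restr R X) = (if X = {} then bas empty_irel else (\<lambda>_. 0))"
  unfolding uu_def using std_eq_empty_iff[of X R] cut_finite[of X Y R] by auto

lemma conv_unit_right:
  fixes f :: "irel \<Rightarrow> irel \<Rightarrow> 'k::comm_ring_1"
  assumes f: "good f" and R: "R \<in> irels"
  shows "conv f uu R = f R"
proof
  fix T
  have "conv f uu R T = (\<Sum>c\<in>cuts R. if c = ({1..fst R}, {}) then f (std_restr R (fst c)) T else 0)"
    unfolding conv_def
  proof (rule sum.cong[OF refl])
    fix c assume c: "c \<in> cuts R"
    obtain X Y where cXY: "c = (X, Y)" by (cases c)
    have Xi: "std_restr R X \<in> irels" using cut_std_irels[OF R c] cXY by simp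
    then have fX: "f (std_restr R X) \<in> fs_on irels" using f unfolding good_def by blast
    show "mult (f (std_restr R (fst c))) (uu (std_restr R (snd c))) T =
        (if c = ({1..fst R}, {}) then f (std_restr R (fst c)) T else 0)"
    proof (cases "Y = {}")
      case True
      then have "X = {1..fst R}" using cut_Y_empty c cXY by blast
      then show ?thesis using True cXY c mult_unit_right[OF fX] by (simp add: uu_std)
    next
      case False
      then show ?thesis using cXY c by (simp add: uu_std mult_zero_right)
    qed
  qed
  also have "\<dots> = f (std_restr R {1..fst R}) T" using cut_right_empty[of R]
    by (simp add: sum.delta[OF finite_cuts])
  also have "\<dots> = f R T" using std_full[OF R] by simp
  finally show "conv f uu R T = f R T" .
qed

lemma conv_unit_left:
  fixes f :: "irel \<Rightarrow> irel \<Rightarrow> 'k::comm_ring_1"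
  assumes f: "good f" and R: "R \<in> irels"
  shows "conv uu f R = f R"
proof
  fix T
  have "conv uu f R T = (\<Sum>c\<in>cuts R. if c = ({}, {1..fst R}) then f (std_restr R (snd c)) T else 0)"
    unfolding conv_def
  proof (rule sum.cong[OF refl])
    fix c assume c: "c \<in> cuts R"
    obtain X Y where cXY: "c = (X, Y)" by (cases c)
    have Yi: "std_restr R Y \<in> irels" using cut_std_irels[OF R c] cXY by simp
    then have fY: "f (std_restr R Y) \<in> fs_on irels" using f unfolding good_def by blast
    show "mult (uu (std_restr R (fst c))) (f (std_restr R (snd c))) T =
        (if c = ({}, {1..fst R}) then f (std_restr R (snd c)) T else 0)"
    proof (cases "X = {}")
      case True
      then have "Y = {1..fst R}" using cut_X_empty c cXY by blast
      then show ?thesis using True cXY c mult_unit_left[OF fY] by (simp add: uu_std1)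
    next
      case False
      then show ?thesis using cXY c by (simp add: uu_std1 mult_zero_left)
    qed
  qed
  also have "\<dots> = f (std_restr R {1..fst R}) T" using cut_left_empty[of R]
    by (simp add: sum.delta[OF finite_cuts])
  also have "\<dots> = f R T" using std_full[OF R] by simp
  finally show "conv uu f R T = f R T" .
qed

lemma card_cut_lt1: "(X, Y) \<in> cuts R \<Longrightarrow> Y \<noteq> {} \<Longrightarrow> card X < fst R"
proof -
  assume c: "(X, Y) \<in> cuts R" and Y: "Y \<noteq> {}"
  have fin: "finite X" "finite Y" using cut_finite[OF c] by auto
  have d: "X \<inter> Y = {}" "X \<union> Y = {1..fst R}" using c unfolding cuts_iff by blast+
  have "card X + card Y = fst R" using card_Un_disjoint[OF fin d(1)] d(2) by simp
  moreover have "card Y > 0" using fin Y by (simp add: card_gt_0_iff)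
  ultimately show ?thesis by simp
qed

lemma card_cut_lt2: "(X, Y) \<in> cuts R \<Longrightarrow> X \<noteq> {} \<Longrightarrow> card Y < fst R"
proof -
  assume c: "(X, Y) \<in> cuts R" and X: "X \<noteq> {}"
  have fin: "finite X" "finite Y" using cut_finite[OF c] by auto
  have d: "X \<inter> Y = {}" "X \<union> Y = {1..fst R}" using c unfolding cuts_iff by blast+
  have "card X + card Y = fst R" using card_Un_disjoint[OF fin d(1)] d(2) by simp
  moreover have "card X > 0" using fin X by (simp add: card_gt_0_iff)
  ultimately show ?thesis by simp
qed

function sL :: "irel \<Rightarrow> irel \<Rightarrow> 'k::comm_ring_1" where
  "sL R = (if fst R = 0 then bas empty_irel
     else (\<lambda>T. - (\<Sum>c\<in>{c\<in>cuts R. snd c \<noteq> {}}. mult (sL (std_restr R (fst c))) (bas (std_restr R (snd c))) T)))"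
  by auto
termination
proof (relation "measure fst", goal_cases)
  case 1 show ?case by simp
next
  case (2 R T c)
  then show ?case using card_cut_lt1[of "fst c" "snd c" R] by simp
qed

function sR :: "irel \<Rightarrow> irel \<Rightarrow> 'k::comm_ring_1" where
  "sR R = (if fst R = 0 then bas empty_irel
     else (\<lambda>T. - (\<Sum>c\<in>{c\<in>cuts R. fst c \<noteq> {}}. mult (bas (std_restr R (fst c))) (sR (std_restr R (snd c))) T)))"
  by auto
termination
proof (relation "measure fst", goal_cases)
  case 1 show ?case by simp
next
  case (2 R T c)
  then show ?case using card_cut_lt2[of "fst c" "snd c" R] by simp
qed

declare sL.simps[simp del] sR.simps[simp del]


lemma sL_good_aux: "R \<in> irels \<Longrightarrow> (sL R :: irel \<Rightarrow> 'k::comm_ring_1) \<in> fs_on irels"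
proof (induction R rule: sL.induct)
  case (1 R)
  show ?case
  proof (cases "fst R = 0")
    case True
    then show ?thesis by (subst sL.simps) (simp add: bas_fs empty_irels)
  next
    case False
    have "(\<lambda>T. - (\<Sum>c\<in>{c\<in>cuts R. snd c \<noteq> {}}. mult (sL (std_restr R (fst c))) (bas (std_restr R (snd c))) T :: 'k))
          \<in> fs_on irels"
    proof (rule fs_uminus, rule fs_sum)
      show "finite {c\<in>cuts R. snd c \<noteq> {}}" using finite_cuts by simp
    next
      fix c assume c: "c \<in> {c\<in>cuts R. snd c \<noteq> {}}"
      have i: "std_restr R (fst c) \<in> irels" "std_restr R (snd c) \<in> irels" using cut_std_irels[OF "1.prems"] c by auto
      show "(mult (sL (std_restr R (fst c))) (bas (std_restr R (snd c))) :: irel \<Rightarrow> 'k) \<in> fs_on irels"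
        by (rule mult_closed, rule "1.IH"[OF False c i(1)], rule bas_fs[OF i(2)])
    qed
    then show ?thesis using False by (subst sL.simps) simp
  qed
qed

lemma sR_good_aux: "R \<in> irels \<Longrightarrow> (sR R :: irel \<Rightarrow> 'k::comm_ring_1) \<in> fs_on irels"
proof (induction R rule: sR.induct)
  case (1 R)
  show ?case
  proof (cases "fst R = 0")
    case True
    then show ?thesis by (subst sR.simps) (simp add: bas_fs empty_irels)
  next
    case False
    have "(\<lambda>T. - (\<Sum>c\<in>{c\<in>cuts R. fst c \<noteq> {}}. mult (bas (std_restr R (fst c))) (sR (std_restr R (snd c))) T :: 'k))
          \<in> fs_on irels"
    proof (rule fs_uminus, rule fs_sum)
      show "finite {c\<in>cuts R. fst c \<noteq> {}}" using finite_cuts by simp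
    next
      fix c assume c: "c \<in> {c\<in>cuts R. fst c \<noteq> {}}"
      have i: "std_restr R (fst c) \<in> irels" "std_restr R (snd c) \<in> irels" using cut_std_irels[OF "1.prems"] c by auto
      show "(mult (bas (std_restr R (fst c))) (sR (std_restr R (snd c))) :: irel \<Rightarrow> 'k) \<in> fs_on irels"
        by (rule mult_closed, rule bas_fs[OF i(1)], rule "1.IH"[OF False c i(2)])
    qed
    then show ?thesis using False by (subst sR.simps) simp
  qed
qed

lemma good_sL: "good sL"
  unfolding good_def using sL_good_aux by blast

lemma good_sR: "good sR"
  unfolding good_def using sR_good_aux by blast

lemma sum_split_cut:
  fixes F :: "nat set \<times> nat set \<Rightarrow> 'k::comm_ring_1"
  assumes "cz \<in> cuts R" "\<And>c. c \<in> cuts R \<Longrightarrow> c \<noteq> cz \<longleftrightarrow> P c"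
  shows "(\<Sum>c\<in>cuts R. F c) = F cz + (\<Sum>c\<in>{c\<in>cuts R. P c}. F c)"
proof -
  have "{c\<in>cuts R. P c} = cuts R - {cz}" using assms(2) by auto
  then show ?thesis using sum.remove[OF finite_cuts assms(1), of F] by simp
qed

lemma conv_sL:
  assumes R: "R \<in> irels"
  shows "conv sL bas R = (uu R :: irel \<Rightarrow> 'k::comm_ring_1)"
proof (cases "fst R = 0")
  case True
  then have Re: "R = empty_irel" using irels_size0 R by blast
  have "conv sL bas R = (\<lambda>T. mult (sL empty_irel) (bas empty_irel) T :: 'k)"
    unfolding conv_def Re cuts_empty by simp
  also have "\<dots> = bas empty_irel"
    by (subst sL.simps) (simp add: empty_irel_def[symmetric] mult_bas_bas mb_empty_left empty_irels,
        simp add: empty_irel_def)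
  finally show ?thesis using Re by simp
next
  case False
  then have Rne: "R \<noteq> empty_irel" by (auto simp: empty_irel_def)
  show ?thesis
  proof
    fix T
    let ?S = "\<Sum>c\<in>{c\<in>cuts R. snd c \<noteq> {}}. mult (sL (std_restr R (fst c))) (bas (std_restr R (snd c))) T :: 'k"
    have "conv sL bas R T = mult (sL (std_restr R {1..fst R})) (bas (std_restr R {})) T + ?S"
      unfolding conv_def
      by (subst sum_split_cut[where cz="({1..fst R}, {})"])
        (use cut_right_empty[of R] in \<open>auto dest: cut_Y_empty\<close>)
    also have "\<dots> = sL R T + ?S"
      using std_full[OF R] mult_unit_right[OF sL_good_aux[OF R, where 'k='k]] by simp
    also have "sL R T = - ?S" using False by (subst sL.simps) simp
    finally show "conv sL bas R T = (uu R T :: 'k)" using Rne by (simp add: uu_def)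
  qed
qed

lemma conv_sR:
  assumes R: "R \<in> irels"
  shows "conv bas sR R = (uu R :: irel \<Rightarrow> 'k::comm_ring_1)"
proof (cases "fst R = 0")
  case True
  then have Re: "R = empty_irel" using irels_size0 R by blast
  have "conv bas sR R = (\<lambda>T. mult (bas empty_irel) (sR empty_irel) T :: 'k)"
    unfolding conv_def Re cuts_empty by simp
  also have "\<dots> = bas empty_irel"
    by (subst sR.simps) (simp add: empty_irel_def[symmetric] mult_bas_bas mb_empty_left empty_irels,
        simp add: empty_irel_def)
  finally show ?thesis using Re by simp
next
  case False
  then have Rne: "R \<noteq> empty_irel" by (auto simp: empty_irel_def)
  show ?thesis
  proof
    fix T
    let ?S = "\<Sum>c\<in>{c\<in>cuts R. fst c \<noteq> {}}. mult (bas (std_restr R (fst c))) (sR (std_restr R (snd c))) T :: 'k"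
    have "conv bas sR R T = mult (bas (std_restr R {})) (sR (std_restr R {1..fst R})) T + ?S"
      unfolding conv_def
      by (subst sum_split_cut[where cz="({}, {1..fst R})"])
        (use cut_left_empty[of R] in \<open>auto dest: cut_X_empty\<close>)
    also have "\<dots> = sR R T + ?S"
      using std_full[OF R] mult_unit_left[OF sR_good_aux[OF R, where 'k='k]] by simp
    also have "sR R T = - ?S" using False by (subst sR.simps) simp
    finally show "conv bas sR R T = (uu R T :: 'k)" using Rne by (simp add: uu_def)
  qed
qed

lemma sL_eq_sR:
  assumes R: "R \<in> irels"
  shows "sL R = (sR R :: irel \<Rightarrow> 'k::comm_ring_1)"
proof -
  have "sL R = (conv sL uu R :: irel \<Rightarrow> 'k)" by (rule conv_unit_right[OF good_sL R, symmetric])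
  also have "\<dots> = conv sL (conv bas sR) R"
    by (rule conv_cong[OF refl _ R]) (rule conv_sR[symmetric])
  also have "\<dots> = conv (conv sL bas) sR R"
    by (rule conv_assoc[symmetric, OF good_sL good_bas good_sR R])
  also have "\<dots> = conv uu sR R"
    by (rule conv_cong[OF _ refl R]) (rule conv_sL)
  also have "\<dots> = sR R" by (rule conv_unit_left[OF good_sR R])
  finally show ?thesis .
qed


definition up :: "nat \<Rightarrow> nat set \<Rightarrow> nat set" where
  "up n X = (\<lambda>i. i + n) ` X"

definition down :: "nat \<Rightarrow> nat set \<Rightarrow> nat set" where
  "down n Z = (\<lambda>z. z - n) ` Z"

lemma std_cong:
  assumes "snd R1 \<inter> (X \<times> X) = snd R2 \<inter> (X \<times> X)" "finite X"
  shows "std_restr R1 X = std_restr R2 X"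
proof -
  have "pullrel (card X) (enum X) (snd R1) = pullrel (card X) (enum X) (snd R2)"
  proof -
    have "\<And>i. i \<in> {1..card X} \<Longrightarrow> enum X i \<in> X" using enum_in[OF assms(2)] by blast
    then show ?thesis unfolding pullrel_def using assms(1) by blast
  qed
  then show ?thesis by (simp add: std_enum)
qed

lemma std_low: "std_restr (K, P) {1..k} = (k, P \<inter> ({1..k} \<times> {1..k}))"
proof -
  have sm: "smono k id" by (simp add: smono_def)
  have im: "id ` {1..k} = {1..k}" by simp
  have "std_restr (K, P) {1..k} = (k, pullrel k id P)"
    using std_char[OF sm im, of "(K, P)"] by simp
  then show ?thesis unfolding pullrel_def by auto
qed

lemma std_high: "std_restr (K, P) {k+1..k+l} = (l, {(i, j). i \<in> {1..l} \<and> j \<in> {1..l} \<and> (i + k, j + k) \<in> P})"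
proof -
  have sm: "smono l (\<lambda>i. i + k)" by (simp add: smono_def)
  have im: "(\<lambda>i. i + k) ` {1..l} = {k+1..k+l}" by (simp add: add.commute)
  have "std_restr (K, P) {k+1..k+l} = (l, pullrel l (\<lambda>i. i + k) P)"
    using std_char[OF sm im, of "(K, P)"] by simp
  then show ?thesis unfolding pullrel_def by auto
qed

lemma std_up:
  assumes "X' \<subseteq> {1..m}"
  shows "std_restr (N, T) (up n X') = std_restr (m, {(i, j). i \<in> {1..m} \<and> j \<in> {1..m} \<and> (i + n, j + n) \<in> T}) X'"
proof -
  have fX: "finite X'" using assms finite_subset by blast
  let ?f = "\<lambda>i. enum X' i + n"
  have sm: "smono (card X') ?f" using smono_enum[OF fX] unfolding smono_def by simp
  have "up n X' = (\<lambda>i. i + n) ` (enum X' ` {1..card X'})" unfolding up_def using enum_image[OF fX] by simp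
  then have im: "?f ` {1..card X'} = up n X'" by (simp add: image_image)
  have "std_restr (N, T) (up n X') = (card X', pullrel (card X') ?f T)"
    using std_char[OF sm im, of "(N, T)"] by simp
  also have "\<dots> = std_restr (m, {(i, j). i \<in> {1..m} \<and> j \<in> {1..m} \<and> (i + n, j + n) \<in> T}) X'"
  proof -
    have "\<And>i. i \<in> {1..card X'} \<Longrightarrow> enum X' i \<in> {1..m}" using enum_in[OF fX] assms by blast
    then show ?thesis unfolding std_enum pullrel_def by auto
  qed
  finally show ?thesis .
qed

lemma split_enum:
  assumes X: "X \<subseteq> {1..n}" and X': "X' \<subseteq> {1..m}"
  defines "Z \<equiv> X \<union> up n X'"
  shows "card Z = card X + card X'"
    and "enum Z ` {1..card X} = X"
    and "enum Z ` {card X + 1..card X + card X'} = up n X'"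
proof -
  have fX: "finite X" using X finite_subset by blast
  have fX': "finite X'" using X' finite_subset by blast
  define f where "f i = (if i \<le> card X then enum X i else enum X' (i - card X) + n)" for i
  have eX: "\<And>i. i \<in> {1..card X} \<Longrightarrow> enum X i \<in> {1..n}" using enum_in[OF fX] X by blast
  have eX': "\<And>i. i \<in> {1..card X'} \<Longrightarrow> enum X' i \<in> {1..m}" using enum_in[OF fX'] X' by blast
  have sm: "smono (card X + card X') f"
    unfolding smono_def
  proof (intro ballI impI)
    fix i j assume i: "i \<in> {1..card X + card X'}" and j: "j \<in> {1..card X + card X'}" and ij: "i < j"
    show "f i < f j"
    proof (cases "j \<le> card X")
      case True
      then show ?thesis using i j ij enum_less[OF fX, of i j] by (simp add: f_def)
    next
      case jF: False
      show ?thesis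
      proof (cases "i \<le> card X")
        case True
        have "enum X i \<le> n" using eX[of i] i True by auto
        moreover have "j - card X \<in> {1..card X'}" using j jF by auto
        then have "enum X' (j - card X) \<ge> 1" using eX'[of "j - card X"] by auto
        ultimately show ?thesis using True jF by (simp add: f_def)
      next
        case False
        then show ?thesis using i j ij jF enum_less[OF fX', of "i - card X" "j - card X"] by (simp add: f_def)
      qed
    qed
  qed
  have im1: "f ` {1..card X} = X"
  proof -
    have "f ` {1..card X} = enum X ` {1..card X}" by (rule image_cong) (auto simp: f_def)
    then show ?thesis using enum_image[OF fX] by simp
  qed
  have im2: "f ` {card X + 1..card X + card X'} = up n X'"
  proof -
    have "f ` {card X + 1..card X + card X'} = (\<lambda>j. enum X' j + n) ` ((\<lambda>i. i - card X) ` {card X + 1..card X + card X'})"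
      by (auto simp: f_def image_iff)
    also have "(\<lambda>i. i - card X) ` {card X + 1..card X + card X'} = {1..card X'}"
    proof
      show "(\<lambda>i. i - card X) ` {card X + 1..card X + card X'} \<subseteq> {1..card X'}" by auto
      show "{1..card X'} \<subseteq> (\<lambda>i. i - card X) ` {card X + 1..card X + card X'}"
      proof
        fix x assume "x \<in> {1..card X'}"
        then have "x = (x + card X) - card X" "x + card X \<in> {card X + 1..card X + card X'}" by auto
        then show "x \<in> (\<lambda>i. i - card X) ` {card X + 1..card X + card X'}" by (rule image_eqI)
      qed
    qed
    also have "(\<lambda>j. enum X' j + n) ` {1..card X'} = up n X'"
    proof -
      have "up n X' = (\<lambda>i. i + n) ` (enum X' ` {1..card X'})" unfolding up_def using enum_image[OF fX'] by simp
      then show ?thesis by (simp add: image_image)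
    qed
    finally show ?thesis .
  qed
  have ivl: "{1..card X + card X'} = {1..card X} \<union> {card X + 1..card X + card X'}" by auto
  have imZ: "f ` {1..card X + card X'} = Z" unfolding Z_def ivl image_Un im1 im2 ..
  show cZ: "card Z = card X + card X'" by (rule enum_unique(1)[OF sm imZ])
  have eq: "\<And>i. i \<in> {1..card X + card X'} \<Longrightarrow> enum Z i = f i" by (rule enum_unique(2)[OF sm imZ])
  show "enum Z ` {1..card X} = X"
    using im1 eq by (metis (no_types, lifting) Un_iff image_cong ivl)
  show "enum Z ` {card X + 1..card X + card X'} = up n X'"
    using im2 eq by (metis (no_types, lifting) Un_iff image_cong ivl)
qed


definition glue :: "nat set \<Rightarrow> nat set \<Rightarrow> (nat \<times> nat) set \<Rightarrow> (nat \<times> nat) set \<Rightarrow> (nat \<times> nat) set" where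
  "glue X Y P1 P2 = {(p, q).
     (\<exists>i j. (i, j) \<in> P1 \<and> i \<in> {1..card X} \<and> j \<in> {1..card X} \<and> p = enum X i \<and> q = enum X j)
   \<or> (\<exists>i j. (i, j) \<in> P2 \<and> i \<in> {1..card Y} \<and> j \<in> {1..card Y} \<and> p = enum Y i \<and> q = enum Y j)
   \<or> (p \<in> X \<and> q \<in> Y)}"

lemma enum_surj: "finite X \<Longrightarrow> p \<in> X \<Longrightarrow> \<exists>i\<in>{1..card X}. p = enum X i"
  using enum_image by blast

lemma glue_recon:
  assumes T: "(N, T) \<in> irels" and c: "(X, Y) \<in> cuts (N, T)"
  shows "glue X Y (snd (std_restr (N, T) X)) (snd (std_restr (N, T) Y)) = T"
proof -
  have fX: "finite X" and fY: "finite Y" using cut_finite[OF c] by auto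
  have d: "X \<inter> Y = {}" "X \<union> Y = {1..N}" and f: "fwd T X Y" using c unfolding cuts_iff by auto
  have Tsub: "T \<subseteq> {1..N} \<times> {1..N}" using T unfolding irels_pair by simp
  show ?thesis
  proof (rule set_eqI)
    fix x :: "nat \<times> nat"
    obtain p q where x: "x = (p, q)" by (cases x)
    show "x \<in> glue X Y (snd (std_restr (N, T) X)) (snd (std_restr (N, T) Y)) \<longleftrightarrow> x \<in> T"
    proof
      assume "x \<in> glue X Y (snd (std_restr (N, T) X)) (snd (std_restr (N, T) Y))"
      then consider (a) i j where "(i, j) \<in> pullrel (card X) (enum X) T" "p = enum X i" "q = enum X j"
        | (b) i j where "(i, j) \<in> pullrel (card Y) (enum Y) T" "p = enum Y i" "q = enum Y j"
        | (c) "p \<in> X" "q \<in> Y"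
        unfolding glue_def x std_enum by auto
      then show "x \<in> T"
      proof cases
        case a then show ?thesis unfolding x pullrel_def by auto
      next
        case b then show ?thesis unfolding x pullrel_def by auto
      next
        case c then show ?thesis using f unfolding x fwd_def by auto
      qed
    next
      assume xT: "x \<in> T"
      then have pq: "p \<in> X \<union> Y" "q \<in> X \<union> Y" using Tsub d(2) x by auto
      show "x \<in> glue X Y (snd (std_restr (N, T) X)) (snd (std_restr (N, T) Y))"
      proof (cases "p \<in> X")
        case pX: True
        show ?thesis
        proof (cases "q \<in> X")
          case True
          obtain i where i: "i \<in> {1..card X}" "p = enum X i" using enum_surj[OF fX pX] by blast
          obtain j where j: "j \<in> {1..card X}" "q = enum X j" using enum_surj[OF fX True] by blast
          have "(i, j) \<in> pullrel (card X) (enum X) T" unfolding pullrel_def using i j xT x by auto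
          then show ?thesis unfolding glue_def x std_enum using i j by auto
        next
          case False
          then have "q \<in> Y" using pq by auto
          then show ?thesis unfolding glue_def x using pX by auto
        qed
      next
        case pY: False
        then have pY: "p \<in> Y" using pq by auto
        show ?thesis
        proof (cases "q \<in> Y")
          case True
          obtain i where i: "i \<in> {1..card Y}" "p = enum Y i" using enum_surj[OF fY pY] by blast
          obtain j where j: "j \<in> {1..card Y}" "q = enum Y j" using enum_surj[OF fY True] by blast
          have "(i, j) \<in> pullrel (card Y) (enum Y) T" unfolding pullrel_def using i j xT x by auto
          then show ?thesis unfolding glue_def x std_enum using i j by auto
        next
          case False
          then have "q \<in> X" using pq by auto
          then have "(p, q) \<notin> T" using f pY unfolding fwd_def by auto
          then show ?thesis using xT x by simp
        qed
      qed
    qed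
  qed
qed

lemma glue_props:
  assumes d: "X \<inter> Y = {}" "X \<union> Y = {1..N}"
    and P1: "P1 \<subseteq> {1..card X} \<times> {1..card X}" "\<forall>i\<in>{1..card X}. (i, i) \<in> P1"
    and P2: "P2 \<subseteq> {1..card Y} \<times> {1..card Y}" "\<forall>i\<in>{1..card Y}. (i, i) \<in> P2"
  defines "T \<equiv> glue X Y P1 P2"
  shows "(N, T) \<in> irels" "(X, Y) \<in> cuts (N, T)"
    "std_restr (N, T) X = (card X, P1)" "std_restr (N, T) Y = (card Y, P2)"
proof -
  have fX: "finite X" and fY: "finite Y"
    using d(2) by (metis finite_Un finite_atLeastAtMost)+
  have eX: "\<And>i. i \<in> {1..card X} \<Longrightarrow> enum X i \<in> X" using enum_in[OF fX] by blast
  have eY: "\<And>i. i \<in> {1..card Y} \<Longrightarrow> enum Y i \<in> Y" using enum_in[OF fY] by blast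
  have memT: "(p, q) \<in> T \<longleftrightarrow>
     (\<exists>i j. (i, j) \<in> P1 \<and> i \<in> {1..card X} \<and> j \<in> {1..card X} \<and> p = enum X i \<and> q = enum X j)
   \<or> (\<exists>i j. (i, j) \<in> P2 \<and> i \<in> {1..card Y} \<and> j \<in> {1..card Y} \<and> p = enum Y i \<and> q = enum Y j)
   \<or> (p \<in> X \<and> q \<in> Y)" for p q
    unfolding T_def glue_def by simp
  have Tsub: "T \<subseteq> {1..N} \<times> {1..N}"
  proof
    fix x assume "x \<in> T"
    then obtain p q where x: "x = (p, q)" and "(p, q) \<in> T" by (cases x) auto
    then have "p \<in> X \<union> Y \<and> q \<in> X \<union> Y" unfolding memT using eX eY by blast
    then show "x \<in> {1..N} \<times> {1..N}" using d(2) x by auto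
  qed
  have Tref: "\<forall>i\<in>{1..N}. (i, i) \<in> T"
  proof
    fix p assume "p \<in> {1..N}"
    then have "p \<in> X \<union> Y" using d(2) by simp
    then have "p \<in> X \<or> p \<in> Y" by simp
    then show "(p, p) \<in> T"
    proof
      assume pX: "p \<in> X"
      obtain i where i: "i \<in> {1..card X}" "p = enum X i" using enum_surj[OF fX pX] by blast
      then show ?thesis unfolding memT using P1(2) by blast
    next
      assume pY: "p \<in> Y"
      obtain i where i: "i \<in> {1..card Y}" "p = enum Y i" using enum_surj[OF fY pY] by blast
      then show ?thesis unfolding memT using P2(2) by blast
    qed
  qed
  show "(N, T) \<in> irels" unfolding irels_pair using Tsub Tref by simp
  have f: "fwd T X Y"
    unfolding fwd_def
  proof (intro ballI conjI)
    fix p q assume p: "p \<in> X" and q: "q \<in> Y"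
    show "(p, q) \<in> T" unfolding memT using p q by simp
    show "(q, p) \<notin> T"
    proof
      assume "(q, p) \<in> T"
      then show False unfolding memT using p q d(1) eX eY by blast
    qed
  qed
  then show "(X, Y) \<in> cuts (N, T)" unfolding cuts_iff using d by simp
  have "pullrel (card X) (enum X) T = P1"
  proof (rule set_eqI)
    fix x :: "nat \<times> nat"
    obtain i j where x: "x = (i, j)" by (cases x)
    show "x \<in> pullrel (card X) (enum X) T \<longleftrightarrow> x \<in> P1"
    proof
      assume "x \<in> pullrel (card X) (enum X) T"
      then have ij: "i \<in> {1..card X}" "j \<in> {1..card X}" "(enum X i, enum X j) \<in> T"
        unfolding x pullrel_def by auto
      have ni: "enum X i \<notin> Y" "enum X j \<notin> Y" using eX[OF ij(1)] eX[OF ij(2)] d(1) by auto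
      from ij(3) ni consider i' j' where "(i', j') \<in> P1" "i' \<in> {1..card X}" "j' \<in> {1..card X}"
        "enum X i = enum X i'" "enum X j = enum X j'"
        | i' where "i' \<in> {1..card Y}" "enum X i = enum Y i'"
        unfolding memT by blast
      then show "x \<in> P1"
      proof cases
        case 1
        then have "i = i'" "j = j'" using enum_inj_iff[OF fX] ij by auto
        then show ?thesis using 1 x by simp
      next
        case 2
        then show ?thesis using ni eY by auto
      qed
    next
      assume "x \<in> P1"
      then have ij: "(i, j) \<in> P1" "i \<in> {1..card X}" "j \<in> {1..card X}" using P1(1) x by auto
      then have "(enum X i, enum X j) \<in> T" unfolding memT by blast
      then show "x \<in> pullrel (card X) (enum X) T" unfolding x pullrel_def using ij by auto
    qed
  qed
  then show "std_restr (N, T) X = (card X, P1)" by (simp add: std_enum)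
  have "pullrel (card Y) (enum Y) T = P2"
  proof (rule set_eqI)
    fix x :: "nat \<times> nat"
    obtain i j where x: "x = (i, j)" by (cases x)
    show "x \<in> pullrel (card Y) (enum Y) T \<longleftrightarrow> x \<in> P2"
    proof
      assume "x \<in> pullrel (card Y) (enum Y) T"
      then have ij: "i \<in> {1..card Y}" "j \<in> {1..card Y}" "(enum Y i, enum Y j) \<in> T"
        unfolding x pullrel_def by auto
      have ni: "enum Y i \<notin> X" "enum Y j \<notin> X" using eY[OF ij(1)] eY[OF ij(2)] d(1) by auto
      from ij(3) ni consider i' j' where "(i', j') \<in> P2" "i' \<in> {1..card Y}" "j' \<in> {1..card Y}"
        "enum Y i = enum Y i'" "enum Y j = enum Y j'"
        | i' where "i' \<in> {1..card X}" "enum Y i = enum X i'"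
        unfolding memT by blast
      then show "x \<in> P2"
      proof cases
        case 1
        then have "i = i'" "j = j'" using enum_inj_iff[OF fY] ij by auto
        then show ?thesis using 1 x by simp
      next
        case 2
        then show ?thesis using ni eX by auto
      qed
    next
      assume "x \<in> P2"
      then have ij: "(i, j) \<in> P2" "i \<in> {1..card Y}" "j \<in> {1..card Y}" using P2(1) x by auto
      then have "(enum Y i, enum Y j) \<in> T" unfolding memT by blast
      then show "x \<in> pullrel (card Y) (enum Y) T" unfolding x pullrel_def using ij by auto
    qed
  qed
  then show "std_restr (N, T) Y = (card Y, P2)" by (simp add: std_enum)
qed


lemma unsh_eq:
  assumes "Tr \<inter> ({n+1..n+m} \<times> {n+1..n+m}) = shift n Sr" "Sr \<subseteq> {1..m} \<times> {1..m}"
  shows "{(i, j). i \<in> {1..m} \<and> j \<in> {1..m} \<and> (i + n, j + n) \<in> Tr} = Sr"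
proof (rule shift_inj[of n])
  have "shift n {(i, j). i \<in> {1..m} \<and> j \<in> {1..m} \<and> (i + n, j + n) \<in> Tr} = Tr \<inter> ({n+1..n+m} \<times> {n+1..n+m})"
    unfolding shift_unsh img_add_ival by (simp add: add.commute)
  then show "shift n {(i, j). i \<in> {1..m} \<and> j \<in> {1..m} \<and> (i + n, j + n) \<in> Tr} = shift n Sr"
    using assms(1) by simp
qed

lemma std_snd: "std_restr (K, P) X = std_restr (K', P) X"
  unfolding std_restr_def by simp

lemma std_shsh:
  assumes T: "T \<in> shsh (n, Rr) (m, Sr)" and R: "(n, Rr) \<in> irels" and S: "(m, Sr) \<in> irels"
    and X: "X \<subseteq> {1..n}" and X': "X' \<subseteq> {1..m}"
  shows "std_restr T (X \<union> up n X') \<in> shsh (std_restr (n, Rr) X) (std_restr (m, Sr) X')"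
proof -
  obtain N Tr where TT: "T = (N, Tr)" by (cases T)
  from T have N: "N = n + m" and TI: "(N, Tr) \<in> IRel N" and t1: "Tr \<inter> ({1..n} \<times> {1..n}) = Rr"
    and t2: "Tr \<inter> ({n+1..n+m} \<times> {n+1..n+m}) = shift n Sr"
    unfolding TT mem_shsh by auto
  have Ti: "T \<in> irels" using TI TT unfolding irels_def by auto
  define Z where "Z = X \<union> up n X'"
  have fX: "finite X" using X finite_subset by blast
  have fX': "finite X'" using X' finite_subset by blast
  have cZ: "card Z = card X + card X'" and eZ1: "enum Z ` {1..card X} = X"
    and eZ2: "enum Z ` {card X + 1..card X + card X'} = up n X'"
    using split_enum[OF X X'] unfolding Z_def by auto
  have fZ: "finite Z" unfolding Z_def up_def using fX fX' by simp
  have Zsub: "Z \<subseteq> {1..N}" unfolding Z_def up_def N using X X' by auto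
  obtain P where P: "std_restr T Z = (card Z, P)" by (simp add: std_restr_def)
  have PI: "(card Z, P) \<in> irels" using std_irels[OF Ti] Zsub TT P by (metis fst_conv)
  have low: "std_restr (card Z, P) {1..card X} = std_restr (n, Rr) X"
  proof -
    have "std_restr (card Z, P) {1..card X} = std_restr (std_restr T Z) {1..card X}" using P by simp
    also have "\<dots> = std_restr T X" using std_std[OF fZ, of "{1..card X}" T] eZ1 cZ by simp
    also have "\<dots> = std_restr (n, Rr) X"
    proof (rule std_cong[OF _ fX])
      show "snd T \<inter> (X \<times> X) = snd (n, Rr) \<inter> (X \<times> X)" using t1 X TT by auto
    qed
    finally show ?thesis .
  qed
  have high: "std_restr (card Z, P) {card X + 1..card X + card X'} = std_restr (m, Sr) X'"
  proof -
    have "std_restr (card Z, P) {card X + 1..card X + card X'} = std_restr (std_restr T Z) {card X + 1..card X + card X'}"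
      using P by simp
    also have "\<dots> = std_restr T (up n X')" using std_std[OF fZ, of "{card X + 1..card X + card X'}" T] eZ2 cZ by simp
    also have "\<dots> = std_restr (m, {(i, j). i \<in> {1..m} \<and> j \<in> {1..m} \<and> (i + n, j + n) \<in> Tr}) X'"
      unfolding TT by (rule std_up[OF X'])
    also have "{(i, j). i \<in> {1..m} \<and> j \<in> {1..m} \<and> (i + n, j + n) \<in> Tr} = Sr"
      by (rule unsh_eq[OF t2]) (use S in \<open>simp add: irels_pair\<close>)
    finally show ?thesis .
  qed
  have p1: "P \<inter> ({1..card X} \<times> {1..card X}) = snd (std_restr (n, Rr) X)"
    using low std_low[of "card Z" P "card X"] by simp
  have p2: "{(i, j). i \<in> {1..card X'} \<and> j \<in> {1..card X'} \<and> (i + card X, j + card X) \<in> P} = snd (std_restr (m, Sr) X')"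
    using high std_high[of "card Z" P "card X" "card X'"] by simp
  have p2': "P \<inter> ({card X + 1..card X + card X'} \<times> {card X + 1..card X + card X'}) = shift (card X) (snd (std_restr (m, Sr) X'))"
    unfolding p2[symmetric] shift_unsh img_add_ival by (simp add: add.commute)
  have "(card Z, P) \<in> IRel (card Z)" using PI unfolding irels_pair IRel_iff by simp
  then have "(card Z, P) \<in> shsh (card X, snd (std_restr (n, Rr) X)) (card X', snd (std_restr (m, Sr) X'))"
    unfolding mem_shsh using cZ p1 p2' by simp
  moreover have "std_restr (n, Rr) X = (card X, snd (std_restr (n, Rr) X))" by (simp add: std_restr_def)
  moreover have "std_restr (m, Sr) X' = (card X', snd (std_restr (m, Sr) X'))" by (simp add: std_restr_def)
  ultimately show ?thesis unfolding Z_def[symmetric] P by simp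
qed


lemma mem_down_hi: "x \<in> down n (Z \<inter> {n+1..n+m}) \<longleftrightarrow> x \<in> {1..m} \<and> x + n \<in> Z"
proof
  assume "x \<in> down n (Z \<inter> {n+1..n+m})"
  then obtain z where "z \<in> Z" "z \<in> {n+1..n+m}" "x = z - n" unfolding down_def by auto
  then show "x \<in> {1..m} \<and> x + n \<in> Z" by auto
next
  assume h: "x \<in> {1..m} \<and> x + n \<in> Z"
  then have "x = (x + n) - n" "x + n \<in> Z \<inter> {n+1..n+m}" by auto
  then show "x \<in> down n (Z \<inter> {n+1..n+m})" unfolding down_def by (rule image_eqI)
qed

lemma mem_up: "x \<in> up n X \<longleftrightarrow> n \<le> x \<and> x - n \<in> X"
  unfolding up_def by (rule mem_img_add)

lemma fwd_cuts:
  assumes T: "(N, Tr) \<in> shsh (n, Rr) (m, Sr)" and c: "(Z1, Z2) \<in> cuts (N, Tr)"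
  shows "(Z1 \<inter> {1..n}, Z2 \<inter> {1..n}) \<in> cuts (n, Rr)"
    and "(down n (Z1 \<inter> {n+1..n+m}), down n (Z2 \<inter> {n+1..n+m})) \<in> cuts (m, Sr)"
    and "Z1 = Z1 \<inter> {1..n} \<union> up n (down n (Z1 \<inter> {n+1..n+m}))"
    and "Z2 = Z2 \<inter> {1..n} \<union> up n (down n (Z2 \<inter> {n+1..n+m}))"
proof -
  from T have N: "N = n + m" and t1: "Tr \<inter> ({1..n} \<times> {1..n}) = Rr"
    and t2: "Tr \<inter> ({n+1..n+m} \<times> {n+1..n+m}) = shift n Sr"
    unfolding mem_shsh by auto
  from c have d1: "Z1 \<inter> Z2 = {}" and d2: "Z1 \<union> Z2 = {1..N}" and f: "fwd Tr Z1 Z2"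
    unfolding cuts_iff by auto
  have "fwd Rr (Z1 \<inter> {1..n}) (Z2 \<inter> {1..n})"
    unfolding fwd_def
  proof (intro ballI conjI)
    fix x y assume x: "x \<in> Z1 \<inter> {1..n}" and y: "y \<in> Z2 \<inter> {1..n}"
    then have "(x, y) \<in> Tr" "(y, x) \<notin> Tr" using f unfolding fwd_def by auto
    then show "(x, y) \<in> Rr" "(y, x) \<notin> Rr" using t1[symmetric] x y by auto
  qed
  moreover have "Z1 \<inter> {1..n} \<union> Z2 \<inter> {1..n} = {1..n}"
  proof -
    have "Z1 \<inter> {1..n} \<union> Z2 \<inter> {1..n} = (Z1 \<union> Z2) \<inter> {1..n}" by blast
    also have "\<dots> = {1..n+m} \<inter> {1..n}" using d2 N by simp
    also have "\<dots> = {1..n}" by auto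
    finally show ?thesis .
  qed
  ultimately show "(Z1 \<inter> {1..n}, Z2 \<inter> {1..n}) \<in> cuts (n, Rr)" unfolding cuts_iff using d1 by auto
  let ?X = "down n (Z1 \<inter> {n+1..n+m})" and ?Y = "down n (Z2 \<inter> {n+1..n+m})"
  have "?X \<inter> ?Y = {}"
  proof (rule equals0I)
    fix x assume "x \<in> ?X \<inter> ?Y"
    then have "x \<in> ?X" "x \<in> ?Y" by auto
    then have "x + n \<in> Z1" "x + n \<in> Z2" unfolding mem_down_hi by auto
    then show False using d1 by auto
  qed
  moreover have "?X \<union> ?Y = {1..m}"
  proof (rule set_eqI)
    fix x
    have "x \<in> {1..m} \<Longrightarrow> x + n \<in> Z1 \<union> Z2" using d2 N by auto
    then show "x \<in> ?X \<union> ?Y \<longleftrightarrow> x \<in> {1..m}" unfolding Un_iff mem_down_hi by auto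
  qed
  moreover have "fwd Sr ?X ?Y"
    unfolding fwd_def
  proof (intro ballI conjI)
    fix x y assume x: "x \<in> ?X" and y: "y \<in> ?Y"
    then have xy: "x \<in> {1..m}" "y \<in> {1..m}" "x + n \<in> Z1" "y + n \<in> Z2" unfolding mem_down_hi by auto
    then have "(x + n, y + n) \<in> Tr" "(y + n, x + n) \<notin> Tr" using f unfolding fwd_def by auto
    moreover have "(x + n, y + n) \<in> {n+1..n+m} \<times> {n+1..n+m}" "(y + n, x + n) \<in> {n+1..n+m} \<times> {n+1..n+m}"
      using xy by auto
    ultimately have "(x + n, y + n) \<in> shift n Sr" "(y + n, x + n) \<notin> shift n Sr"
      using t2[symmetric] by blast+
    then show "(x, y) \<in> Sr" "(y, x) \<notin> Sr" unfolding mem_shift by auto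
  qed
  ultimately show "(?X, ?Y) \<in> cuts (m, Sr)" unfolding cuts_iff by simp
  have upd: "up n (down n (Z \<inter> {n+1..n+m})) = Z \<inter> {n+1..n+m}" for Z
  proof (rule set_eqI)
    fix x show "x \<in> up n (down n (Z \<inter> {n+1..n+m})) \<longleftrightarrow> x \<in> Z \<inter> {n+1..n+m}"
      unfolding mem_up mem_down_hi by auto
  qed
  have iv: "{1..n+m} = {1..n} \<union> {n+1..n+m}" by auto
  have "Z1 \<union> Z2 = {1..n} \<union> {n+1..n+m}" using d2 N iv by simp
  then have "Z1 \<subseteq> {1..n} \<union> {n+1..n+m}" "Z2 \<subseteq> {1..n} \<union> {n+1..n+m}" by blast+
  then show "Z1 = Z1 \<inter> {1..n} \<union> up n (down n (Z1 \<inter> {n+1..n+m}))"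
    "Z2 = Z2 \<inter> {1..n} \<union> up n (down n (Z2 \<inter> {n+1..n+m}))" unfolding upd by auto
qed

lemma down_sub: "down n (Z \<inter> {n+1..n+m}) \<subseteq> {1..m}"
  unfolding mem_down_hi subset_iff by simp


lemma std_pair: "std_restr R X = (card X, snd (std_restr R X))"
  by (simp add: std_restr_def)

lemma std_snd_sub: "snd (std_restr R X) \<subseteq> {1..card X} \<times> {1..card X}"
  by (auto simp: std_restr_def)

lemma side:
  assumes X: "X \<subseteq> {1..n}" and X': "X' \<subseteq> {1..m}"
    and G: "std_restr (N, Tg) (X \<union> up n X') = T1"
    and T1: "T1 \<in> shsh (std_restr (n, Rr) X) (std_restr (m, Sr) X')"
  shows "std_restr (n, Tg \<inter> ({1..n} \<times> {1..n})) X = std_restr (n, Rr) X"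
    and "std_restr (m, {(i, j). i \<in> {1..m} \<and> j \<in> {1..m} \<and> (i + n, j + n) \<in> Tg}) X' = std_restr (m, Sr) X'"
proof -
  define Z where "Z = X \<union> up n X'"
  have fX: "finite X" using X finite_subset by blast
  have fX': "finite X'" using X' finite_subset by blast
  have cZ: "card Z = card X + card X'" and eZ1: "enum Z ` {1..card X} = X"
    and eZ2: "enum Z ` {card X + 1..card X + card X'} = up n X'"
    using split_enum[OF X X'] unfolding Z_def by auto
  have fZ: "finite Z" unfolding Z_def up_def using fX fX' by simp
  define PX where "PX = snd (std_restr (n, Rr) X)"
  define PX' where "PX' = snd (std_restr (m, Sr) X')"
  define PZ where "PZ = snd T1"
  have T1e: "T1 = (card Z, PZ)" unfolding PZ_def using G std_pair[of "(N, Tg)" Z] Z_def by simp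
  have "(card Z, PZ) \<in> shsh (card X, PX) (card X', PX')"
    using T1 T1e std_pair[of "(n, Rr)" X] std_pair[of "(m, Sr)" X'] unfolding PX_def PX'_def by simp
  then have p1: "PZ \<inter> ({1..card X} \<times> {1..card X}) = PX"
    and p2: "PZ \<inter> ({card X + 1..card X + card X'} \<times> {card X + 1..card X + card X'}) = shift (card X) PX'"
    unfolding mem_shsh by auto
  have s1: "{1..card X} \<subseteq> {1..card Z}" "{card X + 1..card X + card X'} \<subseteq> {1..card Z}" using cZ by auto
  have "std_restr (n, Tg \<inter> ({1..n} \<times> {1..n})) X = std_restr (N, Tg) X"
    by (rule std_cong[OF _ fX]) (use X in auto)
  also have "\<dots> = std_restr (std_restr (N, Tg) Z) {1..card X}"
    using std_std[OF fZ s1(1), of "(N, Tg)"] eZ1 by simp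
  also have "\<dots> = (card X, PZ \<inter> ({1..card X} \<times> {1..card X}))"
    using G T1e std_low[of "card Z" PZ "card X"] unfolding Z_def by simp
  also have "\<dots> = std_restr (n, Rr) X" using p1 std_pair[of "(n, Rr)" X] unfolding PX_def by simp
  finally show "std_restr (n, Tg \<inter> ({1..n} \<times> {1..n})) X = std_restr (n, Rr) X" .
  have "std_restr (m, {(i, j). i \<in> {1..m} \<and> j \<in> {1..m} \<and> (i + n, j + n) \<in> Tg}) X' = std_restr (N, Tg) (up n X')"
    by (rule std_up[OF X', symmetric])
  also have "\<dots> = std_restr (std_restr (N, Tg) Z) {card X + 1..card X + card X'}"
    using std_std[OF fZ s1(2), of "(N, Tg)"] eZ2 by simp
  also have "\<dots> = (card X', {(i, j). i \<in> {1..card X'} \<and> j \<in> {1..card X'} \<and> (i + card X, j + card X) \<in> PZ})"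
    using G T1e std_high[of "card Z" PZ "card X" "card X'"] unfolding Z_def by simp
  also have "{(i, j). i \<in> {1..card X'} \<and> j \<in> {1..card X'} \<and> (i + card X, j + card X) \<in> PZ} = PX'"
    by (rule unsh_eq[OF p2]) (unfold PX'_def, rule std_snd_sub)
  also have "(card X', PX') = std_restr (m, Sr) X'" using std_pair[of "(m, Sr)" X'] unfolding PX'_def by simp
  finally show "std_restr (m, {(i, j). i \<in> {1..m} \<and> j \<in> {1..m} \<and> (i + n, j + n) \<in> Tg}) X' = std_restr (m, Sr) X'" .
qed


lemma up_Int_low: "X \<subseteq> {1..n} \<Longrightarrow> X' \<subseteq> {1..m} \<Longrightarrow> X \<inter> up n X' = {}"
proof (rule equals0I)
  fix x assume X: "X \<subseteq> {1..n}" and X': "X' \<subseteq> {1..m}" and x: "x \<in> X \<inter> up n X'"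
  then obtain i where i: "i \<in> X'" "x = i + n" "x \<in> X" unfolding up_def by auto
  have "1 \<le> i" using i(1) X' by auto
  moreover have "x \<le> n" using i(3) X by auto
  ultimately show False using i(2) by simp
qed

lemma bwd_map:
  assumes R: "(n, Rr) \<in> irels" and S: "(m, Sr) \<in> irels"
    and c: "(X, Y) \<in> cuts (n, Rr)" and d: "(X', Y') \<in> cuts (m, Sr)"
    and T1: "T1 \<in> shsh (std_restr (n, Rr) X) (std_restr (m, Sr) X')"
    and T2: "T2 \<in> shsh (std_restr (n, Rr) Y) (std_restr (m, Sr) Y')"
  defines "Z1 \<equiv> X \<union> up n X'" and "Z2 \<equiv> Y \<union> up n Y'"
  defines "Tg \<equiv> glue Z1 Z2 (snd T1) (snd T2)"
  shows "(n + m, Tg) \<in> shsh (n, Rr) (m, Sr)" "(Z1, Z2) \<in> cuts (n + m, Tg)"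
    "std_restr (n + m, Tg) Z1 = T1" "std_restr (n + m, Tg) Z2 = T2"
proof -
  have X: "X \<subseteq> {1..n}" and Y: "Y \<subseteq> {1..n}" using cut_sub[OF c] by auto
  have X': "X' \<subseteq> {1..m}" and Y': "Y' \<subseteq> {1..m}" using cut_sub[OF d] by auto
  from c have cd1: "X \<inter> Y = {}" and cd2: "X \<union> Y = {1..n}" and cf: "fwd Rr X Y" unfolding cuts_iff by auto
  from d have dd1: "X' \<inter> Y' = {}" and dd2: "X' \<union> Y' = {1..m}" and df: "fwd Sr X' Y'" unfolding cuts_iff by auto
  have cZ1: "card Z1 = card X + card X'" using split_enum(1)[OF X X'] unfolding Z1_def .
  have cZ2: "card Z2 = card Y + card Y'" using split_enum(1)[OF Y Y'] unfolding Z2_def .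
  have fT1: "fst T1 = card Z1" using fst_shsh[OF T1] cZ1 by simp
  have fT2: "fst T2 = card Z2" using fst_shsh[OF T2] cZ2 by simp
  have I1: "T1 \<in> IRel (card Z1)" using shsh_sub[of "std_restr (n, Rr) X" "std_restr (m, Sr) X'"] T1 cZ1 by auto
  have I2: "T2 \<in> IRel (card Z2)" using shsh_sub[of "std_restr (n, Rr) Y" "std_restr (m, Sr) Y'"] T2 cZ2 by auto
  have P1: "snd T1 \<subseteq> {1..card Z1} \<times> {1..card Z1}" "\<forall>i\<in>{1..card Z1}. (i, i) \<in> snd T1"
    using I1 unfolding IRel_def by auto
  have P2: "snd T2 \<subseteq> {1..card Z2} \<times> {1..card Z2}" "\<forall>i\<in>{1..card Z2}. (i, i) \<in> snd T2"
    using I2 unfolding IRel_def by auto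
  have D1: "Z1 \<inter> Z2 = {}"
  proof -
    have "X \<inter> up n Y' = {}" "Y \<inter> up n X' = {}" using up_Int_low[OF X Y'] up_Int_low[OF Y X'] by auto
    moreover have "up n X' \<inter> up n Y' = {}" using dd1 unfolding up_def by auto
    ultimately show ?thesis unfolding Z1_def Z2_def using cd1 by blast
  qed
  have D2: "Z1 \<union> Z2 = {1..n + m}"
  proof -
    have "Z1 \<union> Z2 = (X \<union> Y) \<union> up n (X' \<union> Y')" unfolding Z1_def Z2_def up_def by auto
    also have "\<dots> = {1..n} \<union> {n+1..n+m}" unfolding cd2 dd2 up_def img_add_ival by (simp add: add.commute)
    also have "\<dots> = {1..n + m}" by auto
    finally show ?thesis .
  qed
  note gp = glue_props[OF D1 D2 P1 P2, folded Tg_def]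
  show cut: "(Z1, Z2) \<in> cuts (n + m, Tg)" by (rule gp(2))
  have g3: "std_restr (n + m, Tg) Z1 = T1" using gp(3) fT1 by (cases T1) simp
  have g4: "std_restr (n + m, Tg) Z2 = T2" using gp(4) fT2 by (cases T2) simp
  show "std_restr (n + m, Tg) Z1 = T1" "std_restr (n + m, Tg) Z2 = T2" by (rule g3, rule g4)
  have TgI: "(n + m, Tg) \<in> irels" by (rule gp(1))
  have Tgsub: "Tg \<subseteq> {1..n+m} \<times> {1..n+m}" and Tgref: "\<forall>i\<in>{1..n+m}. (i, i) \<in> Tg"
    using TgI unfolding irels_pair by auto
  from cut have tf: "fwd Tg Z1 Z2" unfolding cuts_iff by simp
  note sX = side[OF X X' g3[unfolded Z1_def] T1]
  note sY = side[OF Y Y' g4[unfolded Z2_def] T2]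
  define R' where "R' = Tg \<inter> ({1..n} \<times> {1..n})"
  have R'I: "(n, R') \<in> irels" unfolding irels_pair R'_def using Tgref by auto
  have R'c: "(X, Y) \<in> cuts (n, R')"
  proof -
    have "fwd R' X Y" unfolding fwd_def R'_def
      using tf X Y unfolding fwd_def Z1_def Z2_def by blast
    then show ?thesis unfolding cuts_iff using cd1 cd2 by simp
  qed
  have "R' = glue X Y (snd (std_restr (n, R') X)) (snd (std_restr (n, R') Y))"
    by (rule glue_recon[OF R'I R'c, symmetric])
  also have "\<dots> = glue X Y (snd (std_restr (n, Rr) X)) (snd (std_restr (n, Rr) Y))"
    using sX(1) sY(1) unfolding R'_def by simp
  also have "\<dots> = Rr" by (rule glue_recon[OF R c])
  finally have low: "Tg \<inter> ({1..n} \<times> {1..n}) = Rr" unfolding R'_def .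
  define S' where "S' = {(i, j). i \<in> {1..m} \<and> j \<in> {1..m} \<and> (i + n, j + n) \<in> Tg}"
  have S'I: "(m, S') \<in> irels" unfolding irels_pair S'_def using Tgref by auto
  have S'c: "(X', Y') \<in> cuts (m, S')"
  proof -
    have "fwd S' X' Y'" unfolding fwd_def
    proof (intro ballI conjI)
      fix x y assume x: "x \<in> X'" and y: "y \<in> Y'"
      have "x + n \<in> Z1" "y + n \<in> Z2" using x y unfolding Z1_def Z2_def up_def by auto
      then have "(x + n, y + n) \<in> Tg" "(y + n, x + n) \<notin> Tg" using tf unfolding fwd_def by auto
      then show "(x, y) \<in> S'" "(y, x) \<notin> S'" unfolding S'_def using x y X' Y' by auto
    qed
    then show ?thesis unfolding cuts_iff using dd1 dd2 by simp
  qed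
  have "S' = glue X' Y' (snd (std_restr (m, S') X')) (snd (std_restr (m, S') Y'))"
    by (rule glue_recon[OF S'I S'c, symmetric])
  also have "\<dots> = glue X' Y' (snd (std_restr (m, Sr) X')) (snd (std_restr (m, Sr) Y'))"
    using sX(2) sY(2) unfolding S'_def by simp
  also have "\<dots> = Sr" by (rule glue_recon[OF S d])
  finally have S'e: "S' = Sr" .
  have high: "Tg \<inter> ({n+1..n+m} \<times> {n+1..n+m}) = shift n Sr"
  proof -
    have "shift n S' = Tg \<inter> ({n+1..n+m} \<times> {n+1..n+m})"
      unfolding S'_def shift_unsh img_add_ival by (simp add: add.commute)
    then show ?thesis using S'e by simp
  qed
  have "(n + m, Tg) \<in> IRel (n + m)" using Tgsub Tgref unfolding IRel_iff by simp
  then show "(n + m, Tg) \<in> shsh (n, Rr) (m, Sr)" unfolding mem_shsh using low high by simp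
qed


lemma low_part:
  assumes X: "X \<subseteq> {1..n}" and X': "X' \<subseteq> {1..m}"
  shows "(X \<union> up n X') \<inter> {1..n} = X"
proof -
  have "up n X' \<inter> {1..n} = {}"
  proof (rule equals0I)
    fix x assume "x \<in> up n X' \<inter> {1..n}"
    then obtain i where "i \<in> X'" "x = i + n" "x \<le> n" unfolding up_def by auto
    moreover have "1 \<le> i" using \<open>i \<in> X'\<close> X' by auto
    ultimately show False by simp
  qed
  then show ?thesis using X by blast
qed

lemma high_part:
  assumes X: "X \<subseteq> {1..n}" and X': "X' \<subseteq> {1..m}"
  shows "down n ((X \<union> up n X') \<inter> {n+1..n+m}) = X'"
proof (rule set_eqI)
  fix x
  have "x + n \<notin> X" if "x \<in> {1..m}" using that X by auto
  moreover have "x + n \<in> up n X' \<longleftrightarrow> x \<in> X'" unfolding mem_up by simp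
  ultimately show "x \<in> down n ((X \<union> up n X') \<inter> {n+1..n+m}) \<longleftrightarrow> x \<in> X'"
    unfolding mem_down_hi using X' by auto
qed

definition phi :: "nat \<Rightarrow> nat \<Rightarrow> irel \<times> (nat set \<times> nat set) \<Rightarrow>
    (nat set \<times> nat set) \<times> (nat set \<times> nat set) \<times> (irel \<times> irel)" where
  "phi n m a = (case a of (T, (Z1, Z2)) \<Rightarrow>
     ((Z1 \<inter> {1..n}, Z2 \<inter> {1..n}), ((down n (Z1 \<inter> {n+1..n+m}), down n (Z2 \<inter> {n+1..n+m})),
      (std_restr T Z1, std_restr T Z2))))"

definition psi :: "nat \<Rightarrow> nat \<Rightarrow> (nat set \<times> nat set) \<times> (nat set \<times> nat set) \<times> (irel \<times> irel) \<Rightarrow>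
    irel \<times> (nat set \<times> nat set)" where
  "psi n m b = (case b of ((X, Y), ((X', Y'), (T1, T2))) \<Rightarrow>
     ((n + m, glue (X \<union> up n X') (Y \<union> up n Y') (snd T1) (snd T2)), (X \<union> up n X', Y \<union> up n Y')))"

lemma compat_sum:
  assumes R: "(n, Rr) \<in> irels" and S: "(m, Sr) \<in> irels"
  shows "(\<Sum>T\<in>shsh (n, Rr) (m, Sr). \<Sum>c\<in>cuts T. (bas (gstd T c) z :: 'k::comm_ring_1))
       = (\<Sum>c\<in>cuts (n, Rr). \<Sum>d\<in>cuts (m, Sr).
            \<Sum>T1\<in>shsh (std_restr (n, Rr) (fst c)) (std_restr (m, Sr) (fst d)).
            \<Sum>T2\<in>shsh (std_restr (n, Rr) (snd c)) (std_restr (m, Sr) (snd d)). bas (T1, T2) z)"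
proof -
  define IL where "IL = Sigma (shsh (n, Rr) (m, Sr)) cuts"
  define IR where "IR = Sigma (cuts (n, Rr)) (\<lambda>c. Sigma (cuts (m, Sr)) (\<lambda>d.
     shsh (std_restr (n, Rr) (fst c)) (std_restr (m, Sr) (fst d)) \<times> shsh (std_restr (n, Rr) (snd c)) (std_restr (m, Sr) (snd d))))"
  have L: "(\<Sum>T\<in>shsh (n, Rr) (m, Sr). \<Sum>c\<in>cuts T. (bas (gstd T c) z :: 'k))
      = (\<Sum>a\<in>IL. bas (gstd (fst a) (snd a)) z)"
  proof -
    have "(\<Sum>T\<in>shsh (n, Rr) (m, Sr). \<Sum>c\<in>cuts T. (bas (gstd T c) z :: 'k))
        = (\<Sum>(T, c)\<in>Sigma (shsh (n, Rr) (m, Sr)) cuts. bas (gstd T c) z)"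
      by (rule sum.Sigma[of "shsh (n, Rr) (m, Sr)" cuts "\<lambda>T c. bas (gstd T c) z"]) (auto simp: finite_shsh finite_cuts)
    then show ?thesis unfolding IL_def by (simp add: split_def)
  qed
  have Rs: "(\<Sum>c\<in>cuts (n, Rr). \<Sum>d\<in>cuts (m, Sr).
            \<Sum>T1\<in>shsh (std_restr (n, Rr) (fst c)) (std_restr (m, Sr) (fst d)).
            \<Sum>T2\<in>shsh (std_restr (n, Rr) (snd c)) (std_restr (m, Sr) (snd d)). (bas (T1, T2) z :: 'k))
       = (\<Sum>b\<in>IR. bas (snd (snd b)) z)"
  proof -
    have "(\<Sum>c\<in>cuts (n, Rr). \<Sum>d\<in>cuts (m, Sr).
            \<Sum>T1\<in>shsh (std_restr (n, Rr) (fst c)) (std_restr (m, Sr) (fst d)).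
            \<Sum>T2\<in>shsh (std_restr (n, Rr) (snd c)) (std_restr (m, Sr) (snd d)). (bas (T1, T2) z :: 'k))
      = (\<Sum>c\<in>cuts (n, Rr). \<Sum>d\<in>cuts (m, Sr). \<Sum>p\<in>shsh (std_restr (n, Rr) (fst c)) (std_restr (m, Sr) (fst d)) \<times>
            shsh (std_restr (n, Rr) (snd c)) (std_restr (m, Sr) (snd d)). bas p z)"
      by (simp add: sum.cartesian_product split_def)
    also have "\<dots> = (\<Sum>c\<in>cuts (n, Rr). \<Sum>q\<in>Sigma (cuts (m, Sr)) (\<lambda>d.
       shsh (std_restr (n, Rr) (fst c)) (std_restr (m, Sr) (fst d)) \<times> shsh (std_restr (n, Rr) (snd c)) (std_restr (m, Sr) (snd d))).
       bas (snd q) z)"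
    proof (rule sum.cong[OF refl])
      fix c assume "c \<in> cuts (n, Rr)"
      define A where "A d = shsh (std_restr (n, Rr) (fst c)) (std_restr (m, Sr) (fst d)) \<times> shsh (std_restr (n, Rr) (snd c)) (std_restr (m, Sr) (snd d))" for d
      have fA: "\<forall>d\<in>cuts (m, Sr). finite (A d)" unfolding A_def by (simp add: finite_shsh)
      show "(\<Sum>d\<in>cuts (m, Sr). \<Sum>p\<in>shsh (std_restr (n, Rr) (fst c)) (std_restr (m, Sr) (fst d)) \<times>
            shsh (std_restr (n, Rr) (snd c)) (std_restr (m, Sr) (snd d)). (bas p z :: 'k))
        = (\<Sum>q\<in>Sigma (cuts (m, Sr)) (\<lambda>d.
       shsh (std_restr (n, Rr) (fst c)) (std_restr (m, Sr) (fst d)) \<times> shsh (std_restr (n, Rr) (snd c)) (std_restr (m, Sr) (snd d))).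
       bas (snd q) z)"
        using sum.Sigma[OF finite_cuts fA, of "\<lambda>d p. (bas p z :: 'k)"] unfolding A_def by (simp add: split_def)
    qed
    also have "\<dots> = (\<Sum>b\<in>IR. bas (snd (snd b)) z)"
    proof -
      define B where "B c = Sigma (cuts (m, Sr)) (\<lambda>d.
       shsh (std_restr (n, Rr) (fst c)) (std_restr (m, Sr) (fst d)) \<times> shsh (std_restr (n, Rr) (snd c)) (std_restr (m, Sr) (snd d)))" for c
      have fB: "\<forall>c\<in>cuts (n, Rr). finite (B c)" unfolding B_def
        by (auto intro!: finite_SigmaI simp: finite_cuts finite_shsh)
      show ?thesis using sum.Sigma[OF finite_cuts fB, of "\<lambda>c q. (bas (snd q) z :: 'k)"]
        unfolding B_def IR_def by (simp add: split_def)
    qed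
    finally show ?thesis .
  qed
  have "(\<Sum>a\<in>IL. (bas (gstd (fst a) (snd a)) z :: 'k)) = (\<Sum>b\<in>IR. bas (snd (snd b)) z)"
  proof (rule sum.reindex_bij_witness[where i="psi n m" and j="phi n m"])
    fix a assume a: "a \<in> IL"
    then obtain T Z1 Z2 where aa: "a = (T, (Z1, Z2))" and T: "T \<in> shsh (n, Rr) (m, Sr)"
      and c: "(Z1, Z2) \<in> cuts T" unfolding IL_def by auto
    obtain N Tr where TT: "T = (N, Tr)" by (cases T)
    have N: "N = n + m" using fst_shsh[OF T] TT by simp
    have Ti: "T \<in> irels" using shsh_irels T by blast
    note fc = fwd_cuts[OF T[unfolded TT] c[unfolded TT]]
    show "psi n m (phi n m a) = a"
      unfolding aa phi_def psi_def using fc(3,4) glue_recon[OF Ti[unfolded TT] c[unfolded TT]] N TT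
      by simp
    show "phi n m a \<in> IR"
    proof -
      have s1: "std_restr T Z1 \<in> shsh (std_restr (n, Rr) (Z1 \<inter> {1..n})) (std_restr (m, Sr) (down n (Z1 \<inter> {n+1..n+m})))"
        using std_shsh[OF T R S Int_lower2 down_sub[of n Z1 m], of "Z1"] by (simp only: fc(3)[symmetric])
      have s2: "std_restr T Z2 \<in> shsh (std_restr (n, Rr) (Z2 \<inter> {1..n})) (std_restr (m, Sr) (down n (Z2 \<inter> {n+1..n+m})))"
        using std_shsh[OF T R S Int_lower2 down_sub[of n Z2 m], of "Z2"] by (simp only: fc(4)[symmetric])
      show ?thesis unfolding aa phi_def IR_def using fc(1,2) s1 s2 by simp
    qed
    show "bas (snd (snd (phi n m a))) z = bas (gstd (fst a) (snd a)) z"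
      unfolding aa phi_def gstd_def by simp
  next
    fix b assume b: "b \<in> IR"
    then obtain X Y X' Y' T1 T2 where bb: "b = ((X, Y), ((X', Y'), (T1, T2)))"
      and c: "(X, Y) \<in> cuts (n, Rr)" and d: "(X', Y') \<in> cuts (m, Sr)"
      and T1: "T1 \<in> shsh (std_restr (n, Rr) X) (std_restr (m, Sr) X')"
      and T2: "T2 \<in> shsh (std_restr (n, Rr) Y) (std_restr (m, Sr) Y')"
      unfolding IR_def by auto
    note bw = bwd_map[OF R S c d T1 T2]
    have X: "X \<subseteq> {1..n}" and Y: "Y \<subseteq> {1..n}" using cut_sub[OF c] by auto
    have X': "X' \<subseteq> {1..m}" and Y': "Y' \<subseteq> {1..m}" using cut_sub[OF d] by auto
    show "phi n m (psi n m b) = b"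
      unfolding bb phi_def psi_def using bw(3,4) low_part[OF X X'] low_part[OF Y Y']
        high_part[OF X X'] high_part[OF Y Y'] by simp
    show "psi n m b \<in> IL"
      unfolding bb psi_def IL_def using bw(1,2) by simp
  qed
  then show ?thesis using L Rs by simp
qed


definition G2 :: "irel \<times> irel \<Rightarrow> irel \<times> irel \<Rightarrow> irel \<times> irel \<Rightarrow> 'k::comm_semiring_1" where
  "G2 x x' = (\<lambda>(U, V). mult_basis (fst x) (fst x') U * mult_basis (snd x) (snd x') V)"

lemma mult2_alt: "mult2 t t' = lin (\<lambda>x. lin (G2 x) t') t"
  unfolding mult2_def G2_def by (simp add: split_def)

lemma mb_prod:
  "(mult_basis P P' U * mult_basis Q Q' V :: 'k::comm_ring_1)
   = (\<Sum>T1\<in>shsh P P'. \<Sum>T2\<in>shsh Q Q'. bas (T1, T2) (U, V))"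
proof -
  have "(\<Sum>T1\<in>shsh P P'. \<Sum>T2\<in>shsh Q Q'. (bas (T1, T2) (U, V) :: 'k))
      = (\<Sum>T1\<in>shsh P P'. \<Sum>T2\<in>shsh Q Q'. bas T1 U * bas T2 V)" by (simp add: bas_pair)
  also have "\<dots> = (\<Sum>T1\<in>shsh P P'. bas T1 U) * (\<Sum>T2\<in>shsh Q Q'. bas T2 V)"
    by (simp add: sum_product)
  also have "(\<Sum>T1\<in>shsh P P'. (bas T1 U :: 'k)) = mult_basis P P' U"
    unfolding bas_def mult_basis_def by (simp add: sum.delta'[OF finite_shsh])
  also have "(\<Sum>T2\<in>shsh Q Q'. (bas T2 V :: 'k)) = mult_basis Q Q' V"
    unfolding bas_def mult_basis_def by (simp add: sum.delta'[OF finite_shsh])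
  finally show ?thesis by simp
qed

lemma compat_basis:
  assumes R: "R \<in> irels" and S: "S \<in> irels"
  shows "lin cop_basis (mult_basis R S) = (lin (\<lambda>x. lin (G2 x) (cop_basis S)) (cop_basis R) :: _ \<Rightarrow> 'k::comm_ring_1)"
proof
  fix z :: "irel \<times> irel"
  obtain U V where z: "z = (U, V)" by (cases z)
  obtain n Rr where RR: "R = (n, Rr)" by (cases R)
  obtain m Sr where SS: "S = (m, Sr)" by (cases S)
  have "lin cop_basis (mult_basis R S) z = (\<Sum>T\<in>shsh R S. (cop_basis T z :: 'k))"
    unfolding mb_eq[of R S] lin_indicator[OF finite_shsh] ..
  also have "\<dots> = (\<Sum>T\<in>shsh R S. \<Sum>c\<in>cuts T. (bas (gstd T c) z :: 'k))"
    by (simp add: cop_basis_sum)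
  also have "\<dots> = (\<Sum>c\<in>cuts R. \<Sum>d\<in>cuts S.
            \<Sum>T1\<in>shsh (std_restr R (fst c)) (std_restr S (fst d)).
            \<Sum>T2\<in>shsh (std_restr R (snd c)) (std_restr S (snd d)). bas (T1, T2) z)"
    unfolding RR SS by (rule compat_sum[OF R[unfolded RR] S[unfolded SS]])
  also have "\<dots> = (\<Sum>c\<in>cuts R. \<Sum>d\<in>cuts S. (G2 (gstd R c) (gstd S d) z :: 'k))"
    unfolding G2_def gstd_def z by (simp add: mb_prod)
  also have "\<dots> = lin (\<lambda>x. lin (G2 x) (cop_basis S)) (cop_basis R) z"
    unfolding lin_cop_basis ..
  finally show "lin cop_basis (mult_basis R S) z = (lin (\<lambda>x. lin (G2 x) (cop_basis S)) (cop_basis R) z :: 'k)" .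
qed

lemma compat:
  fixes a b :: "irel \<Rightarrow> 'k::comm_ring_1"
  assumes a: "a \<in> fs_on irels" and b: "b \<in> fs_on irels"
  shows "cop (mult a b) = mult2 (cop a) (cop b)"
proof -
  have fa: "finite (fsupp a)" and fb: "finite (fsupp b)" using a b by (simp_all add: fs_finite)
  have fmb: "finite (fsupp (mult_basis R S :: irel \<Rightarrow> 'k))" for R S
    using mb_fs fs_finite by blast
  have flin: "finite (fsupp (lin (mult_basis R) b :: irel \<Rightarrow> 'k))" for R
    using lin_fs_on[OF fb, of "mult_basis R" irels] mb_fs fs_finite by blast
  have "cop (mult a b) = lin cop_basis (lin (\<lambda>R. lin (mult_basis R) b) a)"
    unfolding cop_def mult_def ..
  also have "\<dots> = lin (\<lambda>R. lin cop_basis (lin (mult_basis R) b)) a"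
    by (rule lin_lin[OF fa flin])
  also have "\<dots> = lin (\<lambda>R. lin (\<lambda>S. lin cop_basis (mult_basis R S)) b) a"
    by (rule lin_cong) (rule lin_lin[OF fb fmb])
  also have "\<dots> = lin (\<lambda>R. lin (\<lambda>S. lin (\<lambda>x. lin (G2 x) (cop_basis S)) (cop_basis R)) b) a"
  proof (rule lin_cong, rule lin_cong)
    fix R S assume h: "R \<in> fsupp a" "S \<in> fsupp b"
    have "R \<in> irels" by (rule fs_sub[OF a h(1)])
    moreover have "S \<in> irels" by (rule fs_sub[OF b h(2)])
    ultimately show "lin cop_basis (mult_basis R S) = (lin (\<lambda>x. lin (G2 x) (cop_basis S)) (cop_basis R) :: _ \<Rightarrow> 'k)"
      by (rule compat_basis)
  qed
  also have "\<dots> = lin (\<lambda>R. lin (\<lambda>x. lin (\<lambda>S. lin (G2 x) (cop_basis S)) b) (cop_basis R)) a"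
    by (rule lin_cong) (rule lin_swap[symmetric])
  also have "\<dots> = lin (\<lambda>R. lin (\<lambda>x. lin (G2 x) (cop b)) (cop_basis R)) a"
    unfolding cop_def
    by (rule lin_cong, rule lin_cong) (rule lin_lin[OF fb cop_basis_finite, symmetric])
  also have "\<dots> = lin (\<lambda>x. lin (G2 x) (cop b)) (lin cop_basis a)"
    by (rule lin_lin[OF fa cop_basis_finite, symmetric])
  also have "\<dots> = mult2 (cop a) (cop b)"
    unfolding mult2_alt cop_def ..
  finally show ?thesis .
qed


lemma lin_uu:
  fixes a :: "irel \<Rightarrow> 'k::comm_ring_1"
  assumes "finite (fsupp a)"
  shows "lin uu a = (\<lambda>T. a empty_irel * bas empty_irel T)"
proof
  fix T
  have "lin uu a T = (\<Sum>x\<in>fsupp a. if x = empty_irel then a x * bas empty_irel T else 0)"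
    unfolding lin_def by (rule sum.cong) (auto simp: uu_def)
  also have "\<dots> = (if empty_irel \<in> fsupp a then a empty_irel * bas empty_irel T else 0)"
    by (rule sum.delta[OF assms])
  also have "\<dots> = a empty_irel * bas empty_irel T" by (auto simp: fsupp_def)
  finally show "lin uu a T = a empty_irel * bas empty_irel T" .
qed

lemma lin_conv_basis:
  "lin (\<lambda>(P, Q). mult (f P) (g Q)) (cop_basis R) = (conv f g R :: irel \<Rightarrow> 'k::comm_ring_1)"
  unfolding lin_cop_basis conv_def gstd_def by (simp add: split_def)

lemma antipode_left:
  fixes a :: "irel \<Rightarrow> 'k::comm_ring_1"
  assumes a: "a \<in> fs_on irels"
  shows "lin (\<lambda>(P, Q). mult (sL P) (bas Q)) (cop a) = (\<lambda>T. a empty_irel * bas empty_irel T)"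
proof -
  have "lin (\<lambda>(P, Q). mult (sL P) (bas Q)) (cop a) = lin (\<lambda>R. lin (\<lambda>(P, Q). mult (sL P) (bas Q)) (cop_basis R)) a"
    unfolding cop_def by (rule lin_lin[OF fs_finite[OF a] cop_basis_finite])
  also have "\<dots> = lin (\<lambda>R. conv sL bas R) a" unfolding lin_conv_basis ..
  also have "\<dots> = lin uu a" by (rule lin_cong, rule conv_sL, rule fs_sub[OF a])
  also have "\<dots> = (\<lambda>T. a empty_irel * bas empty_irel T)" by (rule lin_uu[OF fs_finite[OF a]])
  finally show ?thesis .
qed

lemma antipode_right:
  fixes a :: "irel \<Rightarrow> 'k::comm_ring_1"
  assumes a: "a \<in> fs_on irels"
  shows "lin (\<lambda>(P, Q). mult (bas P) (sL Q)) (cop a) = (\<lambda>T. a empty_irel * bas empty_irel T)"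
proof -
  have "lin (\<lambda>(P, Q). mult (bas P) (sL Q)) (cop a) = lin (\<lambda>R. lin (\<lambda>(P, Q). mult (bas P) (sL Q)) (cop_basis R)) a"
    unfolding cop_def by (rule lin_lin[OF fs_finite[OF a] cop_basis_finite])
  also have "\<dots> = lin (\<lambda>R. conv bas sL R) a" unfolding lin_conv_basis ..
  also have "\<dots> = lin (\<lambda>R. conv bas sR R) a"
    by (rule lin_cong, rule conv_cong[OF refl sL_eq_sR], assumption, rule fs_sub[OF a])
  also have "\<dots> = lin uu a" by (rule lin_cong, rule conv_sR, rule fs_sub[OF a])
  also have "\<dots> = (\<lambda>T. a empty_irel * bas empty_irel T)" by (rule lin_uu[OF fs_finite[OF a]])
  finally show ?thesis .
qed

theorem proposition15:
  fixes dummy :: "'k::field"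
  defines "V \<equiv> (fs_on irels :: (irel \<Rightarrow> 'k) set)"
  shows
    \<comment> \<open>closure of the operations\<close>
    "(\<forall>a\<in>V. \<forall>b\<in>V. mult a b \<in> V)
   \<and> (\<forall>a\<in>V. (cop a :: irel \<times> irel \<Rightarrow> 'k) \<in> fs_on (irels \<times> irels))
   \<and> bas empty_irel \<in> V
    \<comment> \<open>associativity and unit\<close>
   \<and> (\<forall>a\<in>V. \<forall>b\<in>V. \<forall>c\<in>V. mult (mult a b) c = mult a (mult b c))
   \<and> (\<forall>a\<in>V. mult (bas empty_irel) a = a \<and> mult a (bas empty_irel) = a)
    \<comment> \<open>coassociativity\<close>
   \<and> (\<forall>a\<in>V. cop_l (cop a) = cop_r (cop a))
    \<comment> \<open>compatibility: Delta is a unital algebra morphism\<close>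
   \<and> (\<forall>a\<in>V. \<forall>b\<in>V. cop (mult a b) = mult2 (cop a) (cop b))
   \<and> cop (bas empty_irel) = bas (empty_irel, empty_irel)
    \<comment> \<open>grading by size\<close>
   \<and> (\<forall>R\<in>irels. \<forall>S\<in>irels. \<forall>T. (mult (bas R) (bas S) T :: 'k) \<noteq> 0 \<longrightarrow> fst T = fst R + fst S)
   \<and> (\<forall>R\<in>irels. \<forall>U W. (cop (bas R) (U, W) :: 'k) \<noteq> 0 \<longrightarrow> fst U + fst W = fst R)
    \<comment> \<open>a (graded) counit and an antipode exist\<close>
   \<and> (\<exists>c :: irel \<Rightarrow> 'k. \<exists>s :: irel \<Rightarrow> irel \<Rightarrow> 'k.
        let eps = (\<lambda>a :: irel \<Rightarrow> 'k. \<Sum>x\<in>fsupp a. a x * c x) in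
          (\<forall>R\<in>irels. c R \<noteq> 0 \<longrightarrow> fst R = 0)
        \<and> (\<forall>a\<in>V. lin (\<lambda>(P, Q) W. c P * bas Q W) (cop a) = a
                 \<and> lin (\<lambda>(P, Q) U. bas P U * c Q) (cop a) = a)
        \<and> (\<forall>a\<in>V. \<forall>b\<in>V. eps (mult a b) = eps a * eps b)
        \<and> eps (bas empty_irel) = 1
        \<and> (\<forall>R\<in>irels. s R \<in> V)
        \<and> (\<forall>a\<in>V. lin (\<lambda>(P, Q). mult (s P) (bas Q)) (cop a) = (\<lambda>T. eps a * bas empty_irel T)
                 \<and> lin (\<lambda>(P, Q). mult (bas P) (s Q)) (cop a) = (\<lambda>T. eps a * bas empty_irel T)))"
proof -
  have P1: "\<forall>a\<in>V. \<forall>b\<in>V. mult a b \<in> V" unfolding V_def by (intro ballI mult_closed)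
  have P2: "\<forall>a\<in>V. (cop a :: irel \<times> irel \<Rightarrow> 'k) \<in> fs_on (irels \<times> irels)"
    unfolding V_def by (intro ballI cop_closed)
  have P3: "bas empty_irel \<in> V" unfolding V_def by (rule bas_fs[OF empty_irels])
  have P4: "\<forall>a\<in>V. \<forall>b\<in>V. \<forall>c\<in>V. mult (mult a b) c = mult a (mult b c)"
    unfolding V_def by (intro ballI mult_assoc)
  have P5: "\<forall>a\<in>V. mult (bas empty_irel) a = a \<and> mult a (bas empty_irel) = a"
    unfolding V_def by (intro ballI conjI mult_unit_left mult_unit_right)
  have P6: "\<forall>a\<in>V. cop_l (cop a) = cop_r (cop a)"
    unfolding V_def by (intro ballI coassoc)
  have P7: "\<forall>a\<in>V. \<forall>b\<in>V. cop (mult a b) = mult2 (cop a) (cop b)"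
    unfolding V_def by (intro ballI compat)
  have P9: "\<forall>R\<in>irels. \<forall>S\<in>irels. \<forall>T. (mult (bas R) (bas S) T :: 'k) \<noteq> 0 \<longrightarrow> fst T = fst R + fst S"
    using grading_mult by blast
  have P10: "\<forall>R\<in>irels. \<forall>U W. (cop (bas R) (U, W) :: 'k) \<noteq> 0 \<longrightarrow> fst U + fst W = fst R"
    using grading_cop by blast
  define eps where "eps = (\<lambda>a :: irel \<Rightarrow> 'k. \<Sum>x\<in>fsupp a. a x * bas empty_irel x)"
  have epsV: "eps a = a empty_irel" if "a \<in> V" for a
    unfolding eps_def by (rule eps_eq[OF fs_finite]) (use that in \<open>simp add: V_def\<close>)
  have Q1: "\<forall>R\<in>irels. (bas empty_irel R :: 'k) \<noteq> 0 \<longrightarrow> fst R = 0"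
    by (auto simp: bas_def empty_irel_def)
  have Q2: "\<forall>a\<in>V. lin (\<lambda>(P, Q) W. bas empty_irel P * bas Q W) (cop a) = a
                 \<and> lin (\<lambda>(P, Q) U. bas P U * bas empty_irel Q) (cop a) = a"
    unfolding V_def by (intro ballI conjI counit_left counit_right)
  have Q3: "\<forall>a\<in>V. \<forall>b\<in>V. eps (mult a b) = eps a * eps b"
  proof (intro ballI)
    fix a b assume a: "a \<in> V" and b: "b \<in> V"
    have "mult a b \<in> V" using P1 a b by blast
    then show "eps (mult a b) = eps a * eps b"
      using epsV a b mult_at_empty[of a b] unfolding V_def by simp
  qed
  have Q4: "eps (bas empty_irel) = 1" using epsV[OF P3] by (simp add: bas_def)
  have Q5: "\<forall>R\<in>irels. (sL R :: irel \<Rightarrow> 'k) \<in> V" unfolding V_def using sL_good_aux by blast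
  have Q6: "\<forall>a\<in>V. lin (\<lambda>(P, Q). mult (sL P) (bas Q)) (cop a) = (\<lambda>T. eps a * bas empty_irel T)
                 \<and> lin (\<lambda>(P, Q). mult (bas P) (sL Q)) (cop a) = (\<lambda>T. eps a * bas empty_irel T)"
  proof (intro ballI conjI)
    fix a assume a: "a \<in> V"
    show "lin (\<lambda>(P, Q). mult (sL P) (bas Q)) (cop a) = (\<lambda>T. eps a * bas empty_irel T)"
      using antipode_left[of a] a epsV[OF a] unfolding V_def by simp
    show "lin (\<lambda>(P, Q). mult (bas P) (sL Q)) (cop a) = (\<lambda>T. eps a * bas empty_irel T)"
      using antipode_right[of a] a epsV[OF a] unfolding V_def by simp
  qed
  have P11: "\<exists>c :: irel \<Rightarrow> 'k. \<exists>s :: irel \<Rightarrow> irel \<Rightarrow> 'k.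
        let eps = (\<lambda>a :: irel \<Rightarrow> 'k. \<Sum>x\<in>fsupp a. a x * c x) in
          (\<forall>R\<in>irels. c R \<noteq> 0 \<longrightarrow> fst R = 0)
        \<and> (\<forall>a\<in>V. lin (\<lambda>(P, Q) W. c P * bas Q W) (cop a) = a
                 \<and> lin (\<lambda>(P, Q) U. bas P U * c Q) (cop a) = a)
        \<and> (\<forall>a\<in>V. \<forall>b\<in>V. eps (mult a b) = eps a * eps b)
        \<and> eps (bas empty_irel) = 1
        \<and> (\<forall>R\<in>irels. s R \<in> V)
        \<and> (\<forall>a\<in>V. lin (\<lambda>(P, Q). mult (s P) (bas Q)) (cop a) = (\<lambda>T. eps a * bas empty_irel T)
                 \<and> lin (\<lambda>(P, Q). mult (bas P) (s Q)) (cop a) = (\<lambda>T. eps a * bas empty_irel T))"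
  proof (intro exI[of _ "bas empty_irel"] exI[of _ sL])
    show "let eps = (\<lambda>a :: irel \<Rightarrow> 'k. \<Sum>x\<in>fsupp a. a x * bas empty_irel x) in
          (\<forall>R\<in>irels. bas empty_irel R \<noteq> (0::'k) \<longrightarrow> fst R = 0)
        \<and> (\<forall>a\<in>V. lin (\<lambda>(P, Q) W. bas empty_irel P * bas Q W) (cop a) = a
                 \<and> lin (\<lambda>(P, Q) U. bas P U * bas empty_irel Q) (cop a) = a)
        \<and> (\<forall>a\<in>V. \<forall>b\<in>V. eps (mult a b) = eps a * eps b)
        \<and> eps (bas empty_irel) = 1
        \<and> (\<forall>R\<in>irels. sL R \<in> V)
        \<and> (\<forall>a\<in>V. lin (\<lambda>(P, Q). mult (sL P) (bas Q)) (cop a) = (\<lambda>T. eps a * bas empty_irel T)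
                 \<and> lin (\<lambda>(P, Q). mult (bas P) (sL Q)) (cop a) = (\<lambda>T. eps a * bas empty_irel T))"
      unfolding Let_def eps_def[symmetric] using Q1 Q2 Q3 Q4 Q5 Q6 by (intro conjI)
  qed
  show ?thesis by (intro conjI P1 P2 P3 P4 P5 P6 P7 cop_empty P9 P10 P11)
qed


end
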